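(* In the setting described in the context, let $\mathbf W^{[t]}\in\mathbb C^{N_t\times(K+N_s)}$ be such that $\mathbf F(\mathbf W^{[t]})$ is invertible, and let $\bm\Sigma_2^{[t]},\mathbf C_1^{[t]},\mathbf Q^{[t]}$ be the quantities of the context evaluated at $\mathbf W^{[t]}$. Then the gradient of $f$ at $\mathbf W^{[t]}$ is $$\nabla f(\mathbf W)\big|_{\mathbf W=\mathbf W^{[t]}}=2\mathbf C_1^{[t]}+\big(\delta_s\mathbf Q^{[t]}+\delta_s\mathbf Q^{[t]H}-2\delta_c\mathbf H\bm\Sigma_2^{[t]}\mathbf H^H\big)\mathbf W^{[t]}.$$
   Context: Positive integers $N_t,N_r,K,M,L$, nonnegative integer $N_s$; channels $\mathbf h_k\in\mathbb C^{N_t}$, $\mathbf H=[\mathbf h_1,\dots,\mathbf h_K]$, noise variances $\sigma_{ck}^2>0$; $\sigma_s^2>0$; weights $\delta_c,\delta_s\ge0$. $\mathbf W=[\mathbf W_c,\mathbf W_s]\in\mathbb C^{N_t\times(K+N_s)}$, $\mathbf W_c=[\mathbf w_{c1},\dots,\mathbf w_{cK}]$, $\mathbf R_x=\mathbf W\mathbf W^H$. Rate $R_k(\mathbf W)=\log(1+|\mathbf h_k^H\mathbf w_{ck}|^2/I_k)$ with $I_k=\sum_{j\ne k}|\mathbf h_k^H\mathbf w_{cj}|^2+\|\mathbf h_k^H\mathbf W_s\|_F^2+\sigma_{ck}^2$. Sensing model: differentiable $\mathbf a:\mathbb R^2\to\mathbb C^{N_t}$, $\mathbf b:\mathbb R^2\to\mathbb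 C^{N_r}$; parameters $\theta_m,\phi_m\in\mathbb R,\alpha_m\in\mathbb C$; $\mathbf A=[\mathbf a(\theta_m,\phi_m)]_m$, $\mathbf B=[\mathbf b(\theta_m,\phi_m)]_m$, $\mathbf U=\mathrm{diag}(\alpha_m)$; $\dot{\mathbf A}_\theta,\dot{\mathbf A}_\phi,\dot{\mathbf B}_\theta,\dot{\mathbf B}_\phi$ have $m$-th columns the partial derivatives of $\mathbf a$ resp. $\mathbf b$ w.r.t. first resp. second argument at $(\theta_m,\phi_m)$. $\mathbf F(\mathbf W)=\frac{2L}{\sigma_s^2}\begin{bmatrix}\Re\mathbf F_{11}&\Re\mathbf F_{12}&\Re\mathbf F_{13}&-\Im\mathbf F_{13}\\ \Re\mathbf F_{12}^{\mathsf T}&\Re\mathbf F_{22}&\Re\mathbf F_{23}&-\Im\mathbf F_{23}\\ \Re\mathbf F_{13}^{\mathsf T}&\Re\mathbf F_{23}^{\mathsf T}&\Re\mathbf F_{33}&-\Im\mathbf F_{33}\\ -\Im\mathbf F_{13}^{\mathsf T}&-\Im\mathbf F_{23}^{\mathsf T}&-\Im\mathbf F_{33}^{\mathsf T}&\Re\mathbf F_{33}\end{bmatrix}$ with $\mathbf F_{11}=(\mathbf U\mathbf A^H\mathbf R_x\mathbf A\mathbf U^H)^{\mathsf T}\odot(\dot{\mathbf B}_\theta^H\dot{\mathbf B}_\theta)+(\mathbf U\mathbf A^H\mathbf R_x\dot{\mathbf A}_\theta\mathbf U^H)^{\mathsf T}\odot(\mathbf B^H\dot{\mathbf B}_\theta)+(\mathbf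 U\dot{\mathbf A}_\theta^H\mathbf R_x\mathbf A\mathbf U^H)^{\mathsf T}\odot(\dot{\mathbf B}_\theta^H\mathbf B)+(\mathbf U\dot{\mathbf A}_\theta^H\mathbf R_x\dot{\mathbf A}_\theta\mathbf U^H)^{\mathsf T}\odot(\mathbf B^H\mathbf B)$; $\mathbf F_{12}=(\mathbf U\mathbf A^H\mathbf R_x\mathbf A\mathbf U^H)^{\mathsf T}\odot(\dot{\mathbf B}_\theta^H\dot{\mathbf B}_\phi)+(\mathbf U\mathbf A^H\mathbf R_x\dot{\mathbf A}_\theta\mathbf U^H)^{\mathsf T}\odot(\mathbf B^H\dot{\mathbf B}_\phi)+(\mathbf U\dot{\mathbf A}_\phi^H\mathbf R_x\mathbf A\mathbf U^H)^{\mathsf T}\odot(\dot{\mathbf B}_\theta^H\mathbf B)+(\mathbf U\dot{\mathbf A}_\phi^H\mathbf R_x\dot{\mathbf A}_\theta\mathbf U^H)^{\mathsf T}\odot(\mathbf B^H\mathbf B)$; $\mathbf F_{22}$ = $\mathbf F_{11}$ with $\theta$ replaced by $\phi$; $\mathbf F_{13}=(\mathbf A^H\mathbf R_x\mathbf A\mathbf U^H)^{\mathsf T}\odot(\dot{\mathbf B}_\theta^H\mathbf B)+(\mathbf A^H\mathbf R_x\dot{\mathbf A}_\theta\mathbf U^H)^{\mathsf T}\odot(\mathbf B^H\mathbf B)$; $\mathbf F_{23}$ = $\mathbf F_{13}$ with $\theta$ replaced by $\phi$; $\mathbf F_{33}=(\mathbf A^H\mathbf R_x\mathbf A)^{\mathsf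 T}\odot(\mathbf B^H\mathbf B)$ ($\odot$ Hadamard). $f(\mathbf W)=\delta_c\sum_kR_k(\mathbf W)-\delta_s\mathrm{tr}(\mathbf F(\mathbf W)^{-1})$. Gradient convention: for real-valued $g$ of complex matrix $\mathbf W$, $\nabla g=\partial g/\partial\Re\mathbf W+\mathrm j\,\partial g/\partial\Im\mathbf W$ ($\mathrm j$ imaginary unit). Quantities at $\mathbf W$: $T_k=I_k+|\mathbf h_k^H\mathbf w_{ck}|^2$, $\xi_k=|\mathbf h_k^H\mathbf w_{ck}|^2/I_k$, $\eta_k=\overline{\mathbf h_k^H\mathbf w_{ck}}/I_k$, $\beta_k=\xi_k/T_k$, $\bm\Sigma_1=\mathrm{diag}(\eta_k)$, $\bm\Sigma_2=\mathrm{diag}(\beta_k)$, $\mathbf C_1=[\delta_c\mathbf H\bm\Sigma_1^H,\mathbf 0_{N_t\times N_s}]$. $\bm\Phi=\mathbf F(\mathbf W)^{-2}$ partitioned into $M\times M$ blocks $\bm\Phi_{pq}$; $\mathbf Q_{11}=\mathbf A\mathbf U^H(\bm\Phi_{11}\odot\dot{\mathbf B}_\theta^H\dot{\mathbf B}_\theta)\mathbf U\mathbf A^H+\dot{\mathbf A}_\theta\mathbf U^H(\bm\Phi_{11}\odot\mathbf B^H\dot{\mathbf B}_\theta)\mathbf U\mathbf A^H+\mathbf A\mathbf U^H(\bm\Phi_{11}\odot\dot{\mathbf B}_\theta^H\mathbf B)\mathbf U\dot{\mathbf A}_\theta^H+\dot{\mathbf A}_\theta\mathbf U^H(\bm\Phi_{11}\odot\mathbf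 B^H\mathbf B)\mathbf U\dot{\mathbf A}_\theta^H$; $\mathbf Q_{12}=2[\mathbf A\mathbf U^H(\bm\Phi_{12}\odot\dot{\mathbf B}_\theta^H\dot{\mathbf B}_\phi)\mathbf U\mathbf A^H+\dot{\mathbf A}_\theta\mathbf U^H(\bm\Phi_{12}\odot\mathbf B^H\dot{\mathbf B}_\phi)\mathbf U\mathbf A^H+\mathbf A\mathbf U^H(\bm\Phi_{12}\odot\dot{\mathbf B}_\theta^H\mathbf B)\mathbf U\dot{\mathbf A}_\phi^H+\dot{\mathbf A}_\theta\mathbf U^H(\bm\Phi_{12}\odot\mathbf B^H\mathbf B)\mathbf U\dot{\mathbf A}_\phi^H]$; $\mathbf Q_{22}$ = $\mathbf Q_{11}$ with $\bm\Phi_{11}\to\bm\Phi_{22}$, $\theta\to\phi$; $\mathbf Q_{13}=\mathbf A\mathbf U^H((2\bm\Phi_{13}+2\mathrm j\bm\Phi_{14})\odot\dot{\mathbf B}_\theta^H\mathbf B)\mathbf A^H+\dot{\mathbf A}_\theta\mathbf U^H((2\bm\Phi_{13}+2\mathrm j\bm\Phi_{14})\odot\mathbf B^H\mathbf B)\mathbf A^H$; $\mathbf Q_{23}$ = $\mathbf Q_{13}$ with $\bm\Phi_{13},\bm\Phi_{14}\to\bm\Phi_{23},\bm\Phi_{24}$ and $\theta\to\phi$; $\mathbf Q_{33}=\mathbf A((\bm\Phi_{33}+\bm\Phi_{44}+2\mathrm j\bm\Phi_{34})\odot\mathbf B^H\mathbf B)\mathbf A^H$; $\mathbf Q=\frac{2L}{\sigma_s^2}(\mathbf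 Q_{11}+\mathbf Q_{12}+\mathbf Q_{13}+\mathbf Q_{22}+\mathbf Q_{23}+\mathbf Q_{33})$. *)

theory Defs
  imports "Jordan_Normal_Form.Schur_Decomposition" "Jordan_Normal_Form.Gauss_Jordan_Elimination"
    "HOL-Analysis.Derivative"
begin

definition hadamard :: "'a::times mat \<Rightarrow> 'a mat \<Rightarrow> 'a mat" (infixl "\<odot>" 70) where
  "hadamard X Y = Matrix.mat (dim_row X) (dim_col X) (\<lambda>(i,j). X $$ (i,j) * Y $$ (i,j))"

definition mtrace :: "'a::comm_ring_1 mat \<Rightarrow> 'a" where
  "mtrace X = (\<Sum>i<dim_row X. X $$ (i,i))"

definition re_mat :: "complex mat \<Rightarrow> real mat" where "re_mat X = map_mat Re X"
definition im_mat :: "complex mat \<Rightarrow> real mat" where "im_mat X = map_mat Im X"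
definition cmat :: "real mat \<Rightarrow> complex mat" where "cmat X = map_mat complex_of_real X"

definition minv :: "'a::field mat \<Rightarrow> 'a mat" where "minv X = the (mat_inverse X)"

text \<open>4x4 block matrix with M x M blocks, blocks indexed 0..3 (paper: 1..4).\<close>
definition block4 :: "nat \<Rightarrow> (nat \<Rightarrow> nat \<Rightarrow> 'a mat) \<Rightarrow> 'a mat" where
  "block4 M Bl = Matrix.mat (4*M) (4*M) (\<lambda>(i,j). Bl (i div M) (j div M) $$ (i mod M, j mod M))"

definition blk :: "nat \<Rightarrow> 'a mat \<Rightarrow> nat \<Rightarrow> nat \<Rightarrow> 'a mat" where
  "blk M X p q = Matrix.mat M M (\<lambda>(i,j). X $$ (p*M+i, q*M+j))"

definition pert :: "complex mat \<Rightarrow> nat \<Rightarrow> nat \<Rightarrow> complex \<Rightarrow> complex mat" where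
  "pert X i j c = Matrix.mat (dim_row X) (dim_col X) (\<lambda>(a,b). if a = i \<and> b = j then X $$ (a,b) + c else X $$ (a,b))"

text \<open>nabla g(W) = dg/dRe W + j dg/dIm W (entrywise partial derivatives).\<close>
definition has_gradient :: "(complex mat \<Rightarrow> real) \<Rightarrow> complex mat \<Rightarrow> complex mat \<Rightarrow> bool" where
  "has_gradient g X G \<longleftrightarrow> G \<in> carrier_mat (dim_row X) (dim_col X) \<and>
     (\<forall>i<dim_row X. \<forall>j<dim_col X.
        ((\<lambda>t. g (pert X i j (complex_of_real t))) has_real_derivative Re (G $$ (i,j))) (at 0) \<and>
        ((\<lambda>t. g (pert X i j (\<i> * complex_of_real t))) has_real_derivative Im (G $$ (i,j))) (at 0))"

record sens =
  Am :: "complex mat"  dAth :: "complex mat"  dAph :: "complex mat"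
  Bm :: "complex mat"  dBth :: "complex mat"  dBph :: "complex mat"
  Um :: "complex mat"

definition mk_sens :: "nat \<Rightarrow> nat \<Rightarrow> nat \<Rightarrow> (real \<Rightarrow> real \<Rightarrow> nat \<Rightarrow> complex) \<Rightarrow>
   (real \<Rightarrow> real \<Rightarrow> nat \<Rightarrow> complex) \<Rightarrow> (nat \<Rightarrow> real) \<Rightarrow> (nat \<Rightarrow> real) \<Rightarrow> (nat \<Rightarrow> complex) \<Rightarrow> sens" where
  "mk_sens Nt Nr M a b th ph al = \<lparr>
     Am = Matrix.mat Nt M (\<lambda>(i,m). a (th m) (ph m) i),
     dAth = Matrix.mat Nt M (\<lambda>(i,m). vector_derivative (\<lambda>x. a x (ph m) i) (at (th m))),
     dAph = Matrix.mat Nt M (\<lambda>(i,m). vector_derivative (\<lambda>y. a (th m) y i) (at (ph m))),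
     Bm = Matrix.mat Nr M (\<lambda>(i,m). b (th m) (ph m) i),
     dBth = Matrix.mat Nr M (\<lambda>(i,m). vector_derivative (\<lambda>x. b x (ph m) i) (at (th m))),
     dBph = Matrix.mat Nr M (\<lambda>(i,m). vector_derivative (\<lambda>y. b (th m) y i) (at (ph m))),
     Um = mat_diag M al \<rparr>"

abbreviation (input) adj :: "complex mat \<Rightarrow> complex mat" where "adj \<equiv> mat_adjoint"
abbreviation (input) tr :: "complex mat \<Rightarrow> complex mat" where "tr \<equiv> transpose_mat"

definition Fab :: "sens \<Rightarrow> complex mat \<Rightarrow> complex mat \<Rightarrow> complex mat \<Rightarrow> complex mat \<Rightarrow> complex mat \<Rightarrow> complex mat" where
  "Fab S R dA1 dB1 dA2 dB2 = (let A = Am S; B = Bm S; U = Um S in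
      tr (U * adj A * R * A * adj U) \<odot> (adj dB1 * dB2)
    + tr (U * adj A * R * dA1 * adj U) \<odot> (adj B * dB2)
    + tr (U * adj dA2 * R * A * adj U) \<odot> (adj dB1 * B)
    + tr (U * adj dA2 * R * dA1 * adj U) \<odot> (adj B * B))"

definition F3 :: "sens \<Rightarrow> complex mat \<Rightarrow> complex mat \<Rightarrow> complex mat \<Rightarrow> complex mat" where
  "F3 S R dA dB = (let A = Am S; B = Bm S; U = Um S in
      tr (adj A * R * A * adj U) \<odot> (adj dB * B)
    + tr (adj A * R * dA * adj U) \<odot> (adj B * B))"

definition F33 :: "sens \<Rightarrow> complex mat \<Rightarrow> complex mat" where
  "F33 S R = tr (adj (Am S) * R * Am S) \<odot> (adj (Bm S) * Bm S)"

definition fisher :: "nat \<Rightarrow> nat \<Rightarrow> real \<Rightarrow> sens \<Rightarrow> complex mat \<Rightarrow> real mat" where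
  "fisher M L s2s S W = (let R = W * adj W;
      F11 = Fab S R (dAth S) (dBth S) (dAth S) (dBth S);
      F12 = Fab S R (dAth S) (dBth S) (dAph S) (dBph S);
      F22 = Fab S R (dAph S) (dBph S) (dAph S) (dBph S);
      F13 = F3 S R (dAth S) (dBth S);
      F23 = F3 S R (dAph S) (dBph S);
      G = F33 S R;
      Bl = (\<lambda>p q. [[re_mat F11, re_mat F12, re_mat F13, - im_mat F13],
                   [re_mat (tr F12), re_mat F22, re_mat F23, - im_mat F23],
                   [re_mat (tr F13), re_mat (tr F23), re_mat G, - im_mat G],
                   [- im_mat (tr F13), - im_mat (tr F23), - im_mat (tr G), re_mat G]] ! p ! q)
    in (2 * real L / s2s) \<cdot>\<^sub>m block4 M Bl)"

definition hw :: "complex mat \<Rightarrow> complex mat \<Rightarrow> nat \<Rightarrow> nat \<Rightarrow> complex" where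
  "hw H W k j = (adj H * W) $$ (k,j)"

definition interf :: "nat \<Rightarrow> nat \<Rightarrow> complex mat \<Rightarrow> (nat \<Rightarrow> real) \<Rightarrow> complex mat \<Rightarrow> nat \<Rightarrow> real" where
  "interf K Ns H s2c W k = (\<Sum>j\<in>{..<K} - {k}. (cmod (hw H W k j))\<^sup>2)
      + (\<Sum>j<Ns. (cmod (hw H W k (K + j)))\<^sup>2) + s2c k"

definition rate :: "nat \<Rightarrow> nat \<Rightarrow> complex mat \<Rightarrow> (nat \<Rightarrow> real) \<Rightarrow> complex mat \<Rightarrow> nat \<Rightarrow> real" where
  "rate K Ns H s2c W k = ln (1 + (cmod (hw H W k k))\<^sup>2 / interf K Ns H s2c W k)"

definition objective :: "nat \<Rightarrow> nat \<Rightarrow> nat \<Rightarrow> nat \<Rightarrow> complex mat \<Rightarrow> (nat \<Rightarrow> real) \<Rightarrow> real \<Rightarrow> sens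
    \<Rightarrow> real \<Rightarrow> real \<Rightarrow> complex mat \<Rightarrow> real" where
  "objective K Ns M L H s2c s2s S dc ds W =
     dc * (\<Sum>k<K. rate K Ns H s2c W k) - ds * mtrace (minv (fisher M L s2s S W))"

definition Qab :: "sens \<Rightarrow> complex mat \<Rightarrow> complex mat \<Rightarrow> complex mat \<Rightarrow> complex mat \<Rightarrow> complex mat \<Rightarrow> complex mat" where
  "Qab S P dA1 dB1 dA2 dB2 = (let A = Am S; B = Bm S; U = Um S in
      A * adj U * (P \<odot> (adj dB1 * dB2)) * U * adj A
    + dA1 * adj U * (P \<odot> (adj B * dB2)) * U * adj A
    + A * adj U * (P \<odot> (adj dB1 * B)) * U * adj dA2
    + dA1 * adj U * (P \<odot> (adj B * B)) * U * adj dA2)"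

definition Q3 :: "sens \<Rightarrow> complex mat \<Rightarrow> complex mat \<Rightarrow> complex mat \<Rightarrow> complex mat" where
  "Q3 S P dA dB = (let A = Am S; B = Bm S; U = Um S in
      A * adj U * (P \<odot> (adj dB * B)) * adj A
    + dA * adj U * (P \<odot> (adj B * B)) * adj A)"

definition Qmat :: "nat \<Rightarrow> nat \<Rightarrow> real \<Rightarrow> sens \<Rightarrow> complex mat \<Rightarrow> complex mat" where
  "Qmat M L s2s S W = (let Fm = fisher M L s2s S W; Phi = minv Fm * minv Fm;
      P = (\<lambda>p q. cmat (blk M Phi p q));
      Q11 = Qab S (P 0 0) (dAth S) (dBth S) (dAth S) (dBth S);
      Q12 = (2::complex) \<cdot>\<^sub>m Qab S (P 0 1) (dAth S) (dBth S) (dAph S) (dBph S);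
      Q22 = Qab S (P 1 1) (dAph S) (dBph S) (dAph S) (dBph S);
      Q13 = Q3 S ((2::complex) \<cdot>\<^sub>m P 0 2 + (2 * \<i>) \<cdot>\<^sub>m P 0 3) (dAth S) (dBth S);
      Q23 = Q3 S ((2::complex) \<cdot>\<^sub>m P 1 2 + (2 * \<i>) \<cdot>\<^sub>m P 1 3) (dAph S) (dBph S);
      Q33 = Am S * ((P 2 2 + P 3 3 + (2 * \<i>) \<cdot>\<^sub>m P 2 3) \<odot> (adj (Bm S) * Bm S)) * adj (Am S)
    in complex_of_real (2 * real L / s2s) \<cdot>\<^sub>m (Q11 + Q12 + Q13 + Q22 + Q23 + Q33))"

definition grad_formula :: "nat \<Rightarrow> nat \<Rightarrow> nat \<Rightarrow> nat \<Rightarrow> nat \<Rightarrow> complex mat \<Rightarrow> (nat \<Rightarrow> real) \<Rightarrow> real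
    \<Rightarrow> sens \<Rightarrow> real \<Rightarrow> real \<Rightarrow> complex mat \<Rightarrow> complex mat" where
  "grad_formula Nt K Ns M L H s2c s2s S dc ds W = (let
      I = interf K Ns H s2c W;
      T = (\<lambda>k. I k + (cmod (hw H W k k))\<^sup>2);
      xi = (\<lambda>k. (cmod (hw H W k k))\<^sup>2 / I k);
      eta = (\<lambda>k. cnj (hw H W k k) / complex_of_real (I k));
      beta = (\<lambda>k. xi k / T k);
      Sig1 = mat_diag K eta;
      Sig2 = mat_diag K (\<lambda>k. complex_of_real (beta k));
      C1 = four_block_mat (complex_of_real dc \<cdot>\<^sub>m (H * adj Sig1)) (0\<^sub>m Nt Ns) (0\<^sub>m 0 K) (0\<^sub>m 0 Ns);
      Q = Qmat M L s2s S W
    in (2::complex) \<cdot>\<^sub>m C1 + (complex_of_real ds \<cdot>\<^sub>m Q + complex_of_real ds \<cdot>\<^sub>m adj Q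
          - complex_of_real (2 * dc) \<cdot>\<^sub>m (H * Sig2 * adj H)) * W)"

end

theory Submission
  imports Defs
begin


lemma adj_eq: "mat_adjoint (A::complex mat) = Matrix.mat (dim_col A) (dim_row A) (\<lambda>(i,j). cnj (A $$ (j,i)))"
  by (rule eq_matI) (auto simp: mat_adjoint_def mat_of_rows_def)

lemma adj_carrier[simp]: "(A::complex mat) \<in> carrier_mat n m \<Longrightarrow> mat_adjoint A \<in> carrier_mat m n"
  by (simp add: adj_eq)

lemma adj_dims[simp]: "dim_row (mat_adjoint (A::complex mat)) = dim_col A" "dim_col (mat_adjoint A) = dim_row A"
  by (simp_all add: adj_eq)

lemma adj_index[simp]: "i < dim_col A \<Longrightarrow> j < dim_row A \<Longrightarrow> mat_adjoint (A::complex mat) $$ (i,j) = cnj (A $$ (j,i))"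
  by (simp add: adj_eq)

lemma adj_adj[simp]: "mat_adjoint (mat_adjoint (A::complex mat)) = A"
  by (rule eq_matI) auto

lemma adj_mult': "dim_col (A::complex mat) = dim_row B \<Longrightarrow> mat_adjoint (A * B) = mat_adjoint B * mat_adjoint A"
  by (intro eq_matI) (auto simp: scalar_prod_def mult.commute)

lemma adj_add': "dim_row (A::complex mat) = dim_row B \<Longrightarrow> dim_col A = dim_col B \<Longrightarrow> mat_adjoint (A + B) = mat_adjoint A + mat_adjoint B"
  by (intro eq_matI) auto

lemma adj_smult: "mat_adjoint (c \<cdot>\<^sub>m (A::complex mat)) = cnj c \<cdot>\<^sub>m mat_adjoint A"
  by (intro eq_matI) auto

lemma assoc': "dim_col A = dim_row B \<Longrightarrow> dim_col B = dim_row C \<Longrightarrow> (A * B) * (C::'a::semiring_0 mat) = A * (B * C)"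
  by (rule assoc_mult_mat[of A "dim_row A" "dim_col A" B "dim_col B" C "dim_col C"]) auto

lemma add_mult': "dim_row A = dim_row B \<Longrightarrow> dim_col A = dim_col B \<Longrightarrow> dim_col A = dim_row C \<Longrightarrow> (A + B) * (C::'a::semiring_0 mat) = A * C + B * C"
  by (rule add_mult_distrib_mat[of A "dim_row A" "dim_col A" B C "dim_col C"]) auto

lemma mult_add': "dim_row B = dim_row C \<Longrightarrow> dim_col B = dim_col C \<Longrightarrow> dim_col A = dim_row B \<Longrightarrow> (A::'a::semiring_0 mat) * (B + C) = A * B + A * C"
  by (rule mult_add_distrib_mat[of A "dim_row A" "dim_col A" B "dim_col B" C]) auto

lemma mult_smult_left': "dim_col A = dim_row B \<Longrightarrow> (c \<cdot>\<^sub>m (A::'a::comm_ring_1 mat)) * B = c \<cdot>\<^sub>m (A * B)"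
  by (rule eq_matI) (auto simp: scalar_prod_def sum_distrib_left ac_simps)

lemma mult_smult_right': "dim_col A = dim_row B \<Longrightarrow> (A::'a::comm_ring_1 mat) * (c \<cdot>\<^sub>m B) = c \<cdot>\<^sub>m (A * B)"
  by (rule eq_matI) (auto simp: scalar_prod_def sum_distrib_left ac_simps)

lemma transpose_add': "dim_row A = dim_row B \<Longrightarrow> dim_col A = dim_col B \<Longrightarrow> (A + B)\<^sup>T = A\<^sup>T + (B::'a::plus mat)\<^sup>T"
  by (rule eq_matI) auto

lemma transpose_smult': "(c \<cdot>\<^sub>m (A::'a::times mat))\<^sup>T = c \<cdot>\<^sub>m A\<^sup>T"
  by (rule eq_matI) auto

lemma mtrace_comm: assumes "(A::'a::comm_ring_1 mat) \<in> carrier_mat n m" "B \<in> carrier_mat m n"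
  shows "mtrace (A * B) = mtrace (B * A)"
proof -
  have "mtrace (A * B) = (\<Sum>i<n. \<Sum>k<m. A $$ (i,k) * B $$ (k,i))"
    using assms by (simp add: mtrace_def scalar_prod_def atLeast0LessThan)
  also have "\<dots> = (\<Sum>k<m. \<Sum>i<n. B $$ (k,i) * A $$ (i,k))"
    by (subst sum.swap) (simp add: mult.commute)
  also have "\<dots> = mtrace (B * A)"
    using assms by (simp add: mtrace_def scalar_prod_def atLeast0LessThan)
  finally show ?thesis .
qed

lemma mtrace_add': "dim_row A = dim_col A \<Longrightarrow> dim_row B = dim_row A \<Longrightarrow> dim_col B = dim_col A \<Longrightarrow>
   mtrace (A + B) = mtrace A + mtrace (B::'a::comm_ring_1 mat)"
  by (simp add: mtrace_def sum.distrib)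

lemma mtrace_smult: "dim_row A = dim_col A \<Longrightarrow> mtrace (c \<cdot>\<^sub>m (A::'a::comm_ring_1 mat)) = c * mtrace A"
  by (simp add: mtrace_def sum_distrib_left)

lemma hadamard_index[simp]: "i < dim_row X \<Longrightarrow> j < dim_col X \<Longrightarrow> hadamard X Y $$ (i,j) = X $$ (i,j) * Y $$ (i,j)"
  by (simp add: hadamard_def)
lemma hadamard_dims[simp]: "dim_row (hadamard X Y) = dim_row X" "dim_col (hadamard X Y) = dim_col X"
  by (simp_all add: hadamard_def)
lemma hadamard_carrier[simp]: "X \<in> carrier_mat n m \<Longrightarrow> hadamard X Y \<in> carrier_mat n m"
  by (simp add: hadamard_def)

definition hs :: "nat \<Rightarrow> 'a::comm_ring_1 mat \<Rightarrow> 'a mat \<Rightarrow> 'a" where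
  "hs M P F = (\<Sum>m<M. \<Sum>k<M. P $$ (m,k) * F $$ (m,k))"

lemma hs_add: "dim_row F = M \<Longrightarrow> dim_col F = M \<Longrightarrow> dim_row G = M \<Longrightarrow> dim_col G = M \<Longrightarrow>
  hs M P (F + G) = hs M P F + hs M P G"
  by (simp add: hs_def sum.distrib algebra_simps)

lemma trace_hadamard:
  assumes Y: "(Y::complex mat) \<in> carrier_mat n M" and P: "P \<in> carrier_mat M M" and C: "C \<in> carrier_mat M M"
    and Z: "Z \<in> carrier_mat M n" and X: "X \<in> carrier_mat n n"
  shows "mtrace (Y * hadamard P C * Z * X) = hs M P (hadamard ((Z * X * Y)\<^sup>T) C)"
proof -
  have [simp]: "dim_row Y = n" "dim_col Y = M" "dim_row P = M" "dim_col P = M" "dim_row Z = M" "dim_col Z = n"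
     "dim_row X = n" "dim_col X = n" "dim_row C = M" "dim_col C = M" using assms by auto
  have "Y * hadamard P C * Z * X = Y * (hadamard P C * Z * X)"
    by (simp add: assoc')
  hence "mtrace (Y * hadamard P C * Z * X) = mtrace ((hadamard P C * Z * X) * Y)"
    using mtrace_comm[of Y n M "hadamard P C * Z * X"] by (simp add: carrier_matI)
  also have "(hadamard P C * Z * X) * Y = hadamard P C * (Z * X * Y)"
    by (simp add: assoc')
  also have "mtrace \<dots> = (\<Sum>m<M. \<Sum>k<M. hadamard P C $$ (m,k) * (Z * X * Y) $$ (k,m))"
    by (simp add: mtrace_def scalar_prod_def atLeast0LessThan)
  also have "\<dots> = hs M P (hadamard ((Z * X * Y)\<^sup>T) C)"
    unfolding hs_def by (intro sum.cong refl) simp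
  finally show ?thesis .
qed

locale sset =
  fixes Nt Nr M :: nat and S :: sens
  assumes cA: "Am S \<in> carrier_mat Nt M" and cAt: "dAth S \<in> carrier_mat Nt M" and cAp: "dAph S \<in> carrier_mat Nt M"
    and cB: "Bm S \<in> carrier_mat Nr M" and cBt: "dBth S \<in> carrier_mat Nr M" and cBp: "dBph S \<in> carrier_mat Nr M"
    and cU: "Um S \<in> carrier_mat M M"
begin

lemma sdims[simp]: "dim_row (Am S) = Nt" "dim_col (Am S) = M" "dim_row (dAth S) = Nt" "dim_col (dAth S) = M"
  "dim_row (dAph S) = Nt" "dim_col (dAph S) = M" "dim_row (Bm S) = Nr" "dim_col (Bm S) = M"
  "dim_row (dBth S) = Nr" "dim_col (dBth S) = M" "dim_row (dBph S) = Nr" "dim_col (dBph S) = M"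
  "dim_row (Um S) = M" "dim_col (Um S) = M"
  using cA cAt cAp cB cBt cBp cU by auto

lemma Fab_dims[simp]: "dim_row (Fab S R dA1 dB1 dA2 dB2) = M" "dim_col (Fab S R dA1 dB1 dA2 dB2) = M"
  by (simp_all add: Fab_def Let_def)
lemma F3_dims[simp]: "dim_row (F3 S R dA dB) = M" "dim_col (F3 S R dA dB) = M"
  by (simp_all add: F3_def Let_def)
lemma F33_dims[simp]: "dim_row (F33 S R) = M" "dim_col (F33 S R) = M"
  by (simp_all add: F33_def Let_def)

lemma trace_Qab:
  assumes P: "P \<in> carrier_mat M M" and X: "X \<in> carrier_mat Nt Nt"
    and a1: "dA1 \<in> carrier_mat Nt M" and a2: "dA2 \<in> carrier_mat Nt M"
    and b1: "dB1 \<in> carrier_mat Nr M" and b2: "dB2 \<in> carrier_mat Nr M"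
  shows "mtrace (Qab S P dA1 dB1 dA2 dB2 * X) = hs M P (Fab S X dA1 dB1 dA2 dB2)"
proof -
  have [simp]: "dim_row P = M" "dim_col P = M" "dim_row X = Nt" "dim_col X = Nt"
    "dim_row dA1 = Nt" "dim_col dA1 = M" "dim_row dA2 = Nt" "dim_col dA2 = M"
    "dim_row dB1 = Nr" "dim_col dB1 = M" "dim_row dB2 = Nr" "dim_col dB2 = M"
    using assms by auto
  define A where "A = Am S"
  define B where "B = Bm S"
  define U where "U = Um S"
  have [simp]: "dim_row A = Nt" "dim_col A = M" "dim_row B = Nr" "dim_col B = M" "dim_row U = M" "dim_col U = M"
    by (simp_all add: A_def B_def U_def)
  have cA': "A \<in> carrier_mat Nt M" and cB': "B \<in> carrier_mat Nr M" and cU': "U \<in> carrier_mat M M"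
    by (auto intro!: carrier_matI)
  have c1: "mat_adjoint dB1 * dB2 \<in> carrier_mat M M" "mat_adjoint B * dB2 \<in> carrier_mat M M"
    "mat_adjoint dB1 * B \<in> carrier_mat M M" "mat_adjoint B * B \<in> carrier_mat M M"
    by (auto intro!: carrier_matI)
  have cY: "A * mat_adjoint U \<in> carrier_mat Nt M" "dA1 * mat_adjoint U \<in> carrier_mat Nt M"
    and cZ: "U * mat_adjoint A \<in> carrier_mat M Nt" "U * mat_adjoint dA2 \<in> carrier_mat M Nt"
    by (auto intro!: carrier_matI)
  have e1: "mtrace (A * mat_adjoint U * hadamard P (mat_adjoint dB1 * dB2) * U * mat_adjoint A * X)
     = hs M P (hadamard ((U * mat_adjoint A * X * A * mat_adjoint U)\<^sup>T) (mat_adjoint dB1 * dB2))"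
    using trace_hadamard[OF cY(1) P c1(1) cZ(1) X] by (simp add: assoc')
  have e2: "mtrace (dA1 * mat_adjoint U * hadamard P (mat_adjoint B * dB2) * U * mat_adjoint A * X)
     = hs M P (hadamard ((U * mat_adjoint A * X * dA1 * mat_adjoint U)\<^sup>T) (mat_adjoint B * dB2))"
    using trace_hadamard[OF cY(2) P c1(2) cZ(1) X] by (simp add: assoc')
  have e3: "mtrace (A * mat_adjoint U * hadamard P (mat_adjoint dB1 * B) * U * mat_adjoint dA2 * X)
     = hs M P (hadamard ((U * mat_adjoint dA2 * X * A * mat_adjoint U)\<^sup>T) (mat_adjoint dB1 * B))"
    using trace_hadamard[OF cY(1) P c1(3) cZ(2) X] by (simp add: assoc')
  have e4: "mtrace (dA1 * mat_adjoint U * hadamard P (mat_adjoint B * B) * U * mat_adjoint dA2 * X)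
     = hs M P (hadamard ((U * mat_adjoint dA2 * X * dA1 * mat_adjoint U)\<^sup>T) (mat_adjoint B * B))"
    using trace_hadamard[OF cY(2) P c1(4) cZ(2) X] by (simp add: assoc')
  show ?thesis
    unfolding Qab_def Fab_def Let_def A_def[symmetric] B_def[symmetric] U_def[symmetric]
    by (simp add: add_mult' mtrace_add' hs_add e1 e2 e3 e4 del: assoc')
qed

lemma trace_Q3:
  assumes P: "P \<in> carrier_mat M M" and X: "X \<in> carrier_mat Nt Nt"
    and a1: "dA \<in> carrier_mat Nt M" and b1: "dB \<in> carrier_mat Nr M"
  shows "mtrace (Q3 S P dA dB * X) = hs M P (F3 S X dA dB)"
proof -
  have [simp]: "dim_row P = M" "dim_col P = M" "dim_row X = Nt" "dim_col X = Nt"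
    "dim_row dA = Nt" "dim_col dA = M" "dim_row dB = Nr" "dim_col dB = M"
    using assms by auto
  define A where "A = Am S"
  define B where "B = Bm S"
  define U where "U = Um S"
  have [simp]: "dim_row A = Nt" "dim_col A = M" "dim_row B = Nr" "dim_col B = M" "dim_row U = M" "dim_col U = M"
    by (simp_all add: A_def B_def U_def)
  have c1: "mat_adjoint dB * B \<in> carrier_mat M M" "mat_adjoint B * B \<in> carrier_mat M M"
    by (auto intro!: carrier_matI)
  have cY: "A * mat_adjoint U \<in> carrier_mat Nt M" "dA * mat_adjoint U \<in> carrier_mat Nt M"
    and cZ: "mat_adjoint A \<in> carrier_mat M Nt"
    by (auto intro!: carrier_matI)
  have e1: "mtrace (A * mat_adjoint U * hadamard P (mat_adjoint dB * B) * mat_adjoint A * X)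
     = hs M P (hadamard ((mat_adjoint A * X * A * mat_adjoint U)\<^sup>T) (mat_adjoint dB * B))"
    using trace_hadamard[OF cY(1) P c1(1) cZ X] by (simp add: assoc')
  have e2: "mtrace (dA * mat_adjoint U * hadamard P (mat_adjoint B * B) * mat_adjoint A * X)
     = hs M P (hadamard ((mat_adjoint A * X * dA * mat_adjoint U)\<^sup>T) (mat_adjoint B * B))"
    using trace_hadamard[OF cY(2) P c1(2) cZ X] by (simp add: assoc')
  show ?thesis
    unfolding Q3_def F3_def Let_def A_def[symmetric] B_def[symmetric] U_def[symmetric]
    by (simp add: add_mult' mtrace_add' hs_add e1 e2 del: assoc')
qed

lemma trace_Q33:
  assumes P: "P \<in> carrier_mat M M" and X: "X \<in> carrier_mat Nt Nt"
  shows "mtrace (Am S * hadamard P (mat_adjoint (Bm S) * Bm S) * mat_adjoint (Am S) * X) = hs M P (F33 S X)"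
proof -
  have c1: "mat_adjoint (Bm S) * Bm S \<in> carrier_mat M M" and cY: "Am S \<in> carrier_mat Nt M"
    and cZ: "mat_adjoint (Am S) \<in> carrier_mat M Nt"
    by (auto intro!: carrier_matI)
  show ?thesis
    using trace_hadamard[OF cY P c1 cZ X] X by (simp add: F33_def)
qed


lemma Fab_herm:
  assumes R: "R \<in> carrier_mat Nt Nt" and h: "mat_adjoint R = R"
    and a: "dA \<in> carrier_mat Nt M" and b: "dB \<in> carrier_mat Nr M" and x: "x < M" and y: "y < M"
  shows "Re (Fab S R dA dB dA dB $$ (x,y)) = Re (Fab S R dA dB dA dB $$ (y,x))"
proof (cases "x = y")
  case True thus ?thesis by simp
next
  case False
  have [simp]: "dim_row R = Nt" "dim_col R = Nt" "dim_row dA = Nt" "dim_col dA = M" "dim_row dB = Nr" "dim_col dB = M"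
    using assms by auto
  define A where "A = Am S"
  define B where "B = Bm S"
  define U where "U = Um S"
  have [simp]: "dim_row A = Nt" "dim_col A = M" "dim_row B = Nr" "dim_col B = M" "dim_row U = M" "dim_col U = M"
    by (simp_all add: A_def B_def U_def)
  define P1 where "P1 = U * mat_adjoint A * R * A * mat_adjoint U"
  define P2 where "P2 = U * mat_adjoint A * R * dA * mat_adjoint U"
  define P3 where "P3 = U * mat_adjoint dA * R * A * mat_adjoint U"
  define P4 where "P4 = U * mat_adjoint dA * R * dA * mat_adjoint U"
  define C1 where "C1 = mat_adjoint dB * dB"
  define C2 where "C2 = mat_adjoint B * dB"
  define C3 where "C3 = mat_adjoint dB * B"
  define C4 where "C4 = mat_adjoint B * B"
  have [simp]: "dim_row P1 = M" "dim_col P1 = M" "dim_row P2 = M" "dim_col P2 = M" "dim_row P3 = M" "dim_col P3 = M"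
    "dim_row P4 = M" "dim_col P4 = M" "dim_row C1 = M" "dim_col C1 = M" "dim_row C2 = M" "dim_col C2 = M"
    "dim_row C3 = M" "dim_col C3 = M" "dim_row C4 = M" "dim_col C4 = M"
    by (simp_all add: P1_def P2_def P3_def P4_def C1_def C2_def C3_def C4_def)
  have aP1: "mat_adjoint P1 = P1" unfolding P1_def by (simp add: adj_mult' assoc' h)
  have aP4: "mat_adjoint P4 = P4" unfolding P4_def by (simp add: adj_mult' assoc' h)
  have aP2: "mat_adjoint P2 = P3" unfolding P2_def P3_def by (simp add: adj_mult' assoc' h)
  have aC1: "mat_adjoint C1 = C1" unfolding C1_def by (simp add: adj_mult')
  have aC4: "mat_adjoint C4 = C4" unfolding C4_def by (simp add: adj_mult')
  have aC2: "mat_adjoint C2 = C3" unfolding C2_def C3_def by (simp add: adj_mult')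
  have ent: "\<And>Z Z' u v. mat_adjoint Z = Z' \<Longrightarrow> dim_row Z = M \<Longrightarrow> dim_col Z = M \<Longrightarrow> u < M \<Longrightarrow> v < M
     \<Longrightarrow> Z' $$ (u,v) = cnj (Z $$ (v,u))"
    by (metis adj_index)
  have F: "Fab S R dA dB dA dB = hadamard P1\<^sup>T C1 + hadamard P2\<^sup>T C2 + hadamard P3\<^sup>T C3 + hadamard P4\<^sup>T C4"
    by (simp add: Fab_def Let_def A_def[symmetric] B_def[symmetric] U_def[symmetric] P1_def P2_def P3_def P4_def
        C1_def C2_def C3_def C4_def)
  have aP3: "mat_adjoint P3 = P2" using arg_cong[OF aP2, of mat_adjoint] by simp
  have aC3: "mat_adjoint C3 = C2" using arg_cong[OF aC2, of mat_adjoint] by simp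
  have e1: "P1 $$ (x,y) = cnj (P1 $$ (y,x))" "C1 $$ (y,x) = cnj (C1 $$ (x,y))"
    "P4 $$ (x,y) = cnj (P4 $$ (y,x))" "C4 $$ (y,x) = cnj (C4 $$ (x,y))"
    "P2 $$ (x,y) = cnj (P3 $$ (y,x))" "P3 $$ (x,y) = cnj (P2 $$ (y,x))"
    "C2 $$ (y,x) = cnj (C3 $$ (x,y))" "C3 $$ (y,x) = cnj (C2 $$ (x,y))"
    using ent[OF aP1 _ _ x y] ent[OF aC1 _ _ y x] ent[OF aP4 _ _ x y] ent[OF aC4 _ _ y x]
      ent[OF aP3 _ _ x y] ent[OF aP2 _ _ x y] ent[OF aC3 _ _ y x] ent[OF aC2 _ _ y x]
    by simp_all
  show ?thesis
    unfolding F using x y by (simp add: e1)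
qed

lemma F33_herm:
  assumes R: "R \<in> carrier_mat Nt Nt" and h: "mat_adjoint R = R" and x: "x < M" and y: "y < M"
  shows "F33 S R $$ (x,y) = cnj (F33 S R $$ (y,x))"
proof -
  have [simp]: "dim_row R = Nt" "dim_col R = Nt" using assms by auto
  define P1 where "P1 = mat_adjoint (Am S) * R * Am S"
  define C1 where "C1 = mat_adjoint (Bm S) * Bm S"
  have [simp]: "dim_row P1 = M" "dim_col P1 = M" "dim_row C1 = M" "dim_col C1 = M"
    by (simp_all add: P1_def C1_def)
  have aP1: "mat_adjoint P1 = P1" unfolding P1_def by (simp add: adj_mult' assoc' h)
  have aC1: "mat_adjoint C1 = C1" unfolding C1_def by (simp add: adj_mult')
  have "P1 $$ (x,y) = cnj (P1 $$ (y,x))" "C1 $$ (y,x) = cnj (C1 $$ (x,y))"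
    using adj_index[of x P1 y] adj_index[of y C1 x] aP1 aC1 x y by auto
  thus ?thesis using x y by (simp add: F33_def P1_def[symmetric] C1_def[symmetric])
qed

end

definition FB :: "sens \<Rightarrow> complex mat \<Rightarrow> nat \<Rightarrow> nat \<Rightarrow> real mat" where
  "FB S R = (let
      F11 = Fab S R (dAth S) (dBth S) (dAth S) (dBth S);
      F12 = Fab S R (dAth S) (dBth S) (dAph S) (dBph S);
      F22 = Fab S R (dAph S) (dBph S) (dAph S) (dBph S);
      F13 = F3 S R (dAth S) (dBth S);
      F23 = F3 S R (dAph S) (dBph S);
      G = F33 S R
    in (\<lambda>p q. [[re_mat F11, re_mat F12, re_mat F13, - im_mat F13],
                   [re_mat (F12\<^sup>T), re_mat F22, re_mat F23, - im_mat F23],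
                   [re_mat (F13\<^sup>T), re_mat (F23\<^sup>T), re_mat G, - im_mat G],
                   [- im_mat (F13\<^sup>T), - im_mat (F23\<^sup>T), - im_mat (G\<^sup>T), re_mat G]] ! p ! q))"

lemma fisher_FB: "fisher M L s2s S W = (2 * real L / s2s) \<cdot>\<^sub>m block4 M (FB S (W * mat_adjoint W))"
  unfolding fisher_def FB_def Let_def ..

lemma re_mat_index[simp]: "i < dim_row X \<Longrightarrow> j < dim_col X \<Longrightarrow> re_mat X $$ (i,j) = Re (X $$ (i,j))"
  by (simp add: re_mat_def)
lemma im_mat_index[simp]: "i < dim_row X \<Longrightarrow> j < dim_col X \<Longrightarrow> im_mat X $$ (i,j) = Im (X $$ (i,j))"
  by (simp add: im_mat_def)
lemma re_im_dims[simp]: "dim_row (re_mat X) = dim_row X" "dim_col (re_mat X) = dim_col X"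
  "dim_row (im_mat X) = dim_row X" "dim_col (im_mat X) = dim_col X"
  by (simp_all add: re_mat_def im_mat_def)
lemma cmat_index[simp]: "i < dim_row X \<Longrightarrow> j < dim_col X \<Longrightarrow> cmat X $$ (i,j) = complex_of_real (X $$ (i,j))"
  by (simp add: cmat_def)
lemma cmat_dims[simp]: "dim_row (cmat X) = dim_row X" "dim_col (cmat X) = dim_col X"
  by (simp_all add: cmat_def)
lemma blk_index[simp]: "i < M \<Longrightarrow> j < M \<Longrightarrow> blk M X p q $$ (i,j) = X $$ (p*M+i, q*M+j)"
  by (simp add: blk_def)
lemma blk_dims[simp]: "dim_row (blk M X p q) = M" "dim_col (blk M X p q) = M"
  by (simp_all add: blk_def)

lemma sum_split_add: "(\<Sum>a<n+(m::nat). f a) = (\<Sum>a<n. f a) + (\<Sum>x<m. f (n+x))"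
  by (induction m) (simp_all add: add_ac)

lemma sum_blocks: "(\<Sum>a<(k::nat)*(M::nat). f a) = (\<Sum>p<k. \<Sum>x<M. f (p*M + x))"
proof (induction k)
  case 0 thus ?case by simp
next
  case (Suc k)
  have "(\<Sum>a<Suc k * M. f a) = (\<Sum>a<k*M + M. f a)" by (simp add: add.commute)
  also have "\<dots> = (\<Sum>a<k*M. f a) + (\<Sum>x<M. f (k*M+x))" by (rule sum_split_add)
  finally show ?case using Suc by simp
qed

lemma divmod_blk: "(x::nat) < M \<Longrightarrow> (p*M + x) div M = p" "(x::nat) < M \<Longrightarrow> (p*M + x) mod M = x"
  by simp_all

lemma blk_bound: "p < k \<Longrightarrow> (x::nat) < M \<Longrightarrow> p*M + x < k*M"
proof -
  assume "p < k" "x < M"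
  hence "p*M + x < p*M + M" by simp
  also have "\<dots> = Suc p * M" by simp
  also have "\<dots> \<le> k * M" using \<open>p < k\<close> by (intro mult_right_mono) auto
  finally show ?thesis .
qed

lemma block4_index: "i < 4*M \<Longrightarrow> j < 4*M \<Longrightarrow> block4 M Bl $$ (i,j) = Bl (i div M) (j div M) $$ (i mod M, j mod M)"
  by (simp add: block4_def)
lemma block4_dims[simp]: "dim_row (block4 M Bl) = 4*M" "dim_col (block4 M Bl) = 4*M"
  by (simp_all add: block4_def)

lemma trace_block4:
  assumes "(Phi::real mat) \<in> carrier_mat (4*M) (4*M)"
  shows "mtrace (Phi * block4 M Bl) = (\<Sum>p<4. \<Sum>q<4. \<Sum>x<M. \<Sum>y<M. Phi $$ (p*M+x, q*M+y) * Bl q p $$ (y,x))"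
proof -
  have "mtrace (Phi * block4 M Bl) = (\<Sum>a<4*M. \<Sum>b<4*M. Phi $$ (a,b) * block4 M Bl $$ (b,a))"
    using assms by (simp add: mtrace_def scalar_prod_def atLeast0LessThan)
  also have "\<dots> = (\<Sum>p<4. \<Sum>x<M. \<Sum>q<4. \<Sum>y<M. Phi $$ (p*M+x, q*M+y) * block4 M Bl $$ (q*M+y, p*M+x))"
    by (simp add: sum_blocks)
  also have "\<dots> = (\<Sum>p<4. \<Sum>x<M. \<Sum>q<4. \<Sum>y<M. Phi $$ (p*M+x, q*M+y) * Bl q p $$ (y,x))"
    by (intro sum.cong refl) (simp add: block4_index blk_bound divmod_blk)
  also have "\<dots> = (\<Sum>p<4. \<Sum>q<4. \<Sum>x<M. \<Sum>y<M. Phi $$ (p*M+x, q*M+y) * Bl q p $$ (y,x))"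
    by (rule sum.cong[OF refl], rule sum.swap)
  finally show ?thesis .
qed

lemma sym_swap:
  assumes sym: "\<And>a b. a < 4*M \<Longrightarrow> b < 4*M \<Longrightarrow> (Phi::real mat) $$ (a,b) = Phi $$ (b,a)"
    and p: "p < 4" and q: "q < 4"
  shows "(\<Sum>x<M. \<Sum>y<M. Phi $$ (p*M+x, q*M+y) * f y x) = (\<Sum>x<M. \<Sum>y<M. Phi $$ (q*M+x, p*M+y) * f x y)"
proof -
  have "(\<Sum>x<M. \<Sum>y<M. Phi $$ (p*M+x, q*M+y) * f y x) = (\<Sum>x<M. \<Sum>y<M. Phi $$ (q*M+y, p*M+x) * f y x)"
    by (intro sum.cong refl) (simp add: sym blk_bound p q)
  also have "\<dots> = (\<Sum>x<M. \<Sum>y<M. Phi $$ (q*M+x, p*M+y) * f x y)"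
    by (rule sum.swap)
  finally show ?thesis .
qed


lemma FB_simps:
  "FB S R 0 0 = re_mat (Fab S R (dAth S) (dBth S) (dAth S) (dBth S))"
  "FB S R 0 1 = re_mat (Fab S R (dAth S) (dBth S) (dAph S) (dBph S))"
  "FB S R 0 2 = re_mat (F3 S R (dAth S) (dBth S))"
  "FB S R 0 3 = - im_mat (F3 S R (dAth S) (dBth S))"
  "FB S R 1 0 = re_mat ((Fab S R (dAth S) (dBth S) (dAph S) (dBph S))\<^sup>T)"
  "FB S R 1 1 = re_mat (Fab S R (dAph S) (dBph S) (dAph S) (dBph S))"
  "FB S R 1 2 = re_mat (F3 S R (dAph S) (dBph S))"
  "FB S R 1 3 = - im_mat (F3 S R (dAph S) (dBph S))"
  "FB S R 2 0 = re_mat ((F3 S R (dAth S) (dBth S))\<^sup>T)"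
  "FB S R 2 1 = re_mat ((F3 S R (dAph S) (dBph S))\<^sup>T)"
  "FB S R 2 2 = re_mat (F33 S R)"
  "FB S R 2 3 = - im_mat (F33 S R)"
  "FB S R 3 0 = - im_mat ((F3 S R (dAth S) (dBth S))\<^sup>T)"
  "FB S R 3 1 = - im_mat ((F3 S R (dAph S) (dBph S))\<^sup>T)"
  "FB S R 3 2 = - im_mat ((F33 S R)\<^sup>T)"
  "FB S R 3 3 = re_mat (F33 S R)"
  "FB S R 0 (Suc 0) = re_mat (Fab S R (dAth S) (dBth S) (dAph S) (dBph S))"
  "FB S R (Suc 0) 0 = re_mat ((Fab S R (dAth S) (dBth S) (dAph S) (dBph S))\<^sup>T)"
  "FB S R (Suc 0) (Suc 0) = re_mat (Fab S R (dAph S) (dBph S) (dAph S) (dBph S))"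
  "FB S R (Suc 0) 2 = re_mat (F3 S R (dAph S) (dBph S))"
  "FB S R (Suc 0) 3 = - im_mat (F3 S R (dAph S) (dBph S))"
  "FB S R 2 (Suc 0) = re_mat ((F3 S R (dAph S) (dBph S))\<^sup>T)"
  "FB S R 3 (Suc 0) = - im_mat ((F3 S R (dAph S) (dBph S))\<^sup>T)"
  by (simp_all add: FB_def Let_def)

definition Qsum :: "nat \<Rightarrow> sens \<Rightarrow> real mat \<Rightarrow> complex mat" where
  "Qsum M S Phi = (let P = (\<lambda>p q. cmat (blk M Phi p q));
      Q11 = Qab S (P 0 0) (dAth S) (dBth S) (dAth S) (dBth S);
      Q12 = (2::complex) \<cdot>\<^sub>m Qab S (P 0 1) (dAth S) (dBth S) (dAph S) (dBph S);
      Q22 = Qab S (P 1 1) (dAph S) (dBph S) (dAph S) (dBph S);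
      Q13 = Q3 S ((2::complex) \<cdot>\<^sub>m P 0 2 + (2 * \<i>) \<cdot>\<^sub>m P 0 3) (dAth S) (dBth S);
      Q23 = Q3 S ((2::complex) \<cdot>\<^sub>m P 1 2 + (2 * \<i>) \<cdot>\<^sub>m P 1 3) (dAph S) (dBph S);
      Q33 = Am S * (hadamard (P 2 2 + P 3 3 + (2 * \<i>) \<cdot>\<^sub>m P 2 3) (mat_adjoint (Bm S) * Bm S)) * mat_adjoint (Am S)
    in Q11 + Q12 + Q13 + Q22 + Q23 + Q33)"

lemma Qmat_Qsum: "Qmat M L s2s S W = complex_of_real (2 * real L / s2s) \<cdot>\<^sub>m
   Qsum M S (minv (fisher M L s2s S W) * minv (fisher M L s2s S W))"
  unfolding Qmat_def Qsum_def Let_def ..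

context sset begin

lemma FB_sym:
  assumes R: "R \<in> carrier_mat Nt Nt" and h: "mat_adjoint R = R"
    and p: "p < 4" and q: "q < 4" and x: "x < M" and y: "y < M"
  shows "FB S R p q $$ (x,y) = FB S R q p $$ (y,x)"
proof -
  have s1: "Re (Fab S R (dAth S) (dBth S) (dAth S) (dBth S) $$ (x,y)) = Re (Fab S R (dAth S) (dBth S) (dAth S) (dBth S) $$ (y,x))"
    by (rule Fab_herm[OF R h cAt cBt x y])
  have s2: "Re (Fab S R (dAph S) (dBph S) (dAph S) (dBph S) $$ (x,y)) = Re (Fab S R (dAph S) (dBph S) (dAph S) (dBph S) $$ (y,x))"
    by (rule Fab_herm[OF R h cAp cBp x y])
  have s3: "Re (F33 S R $$ (x,y)) = Re (F33 S R $$ (y,x))"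
    using F33_herm[OF R h x y] by simp
  have "p = 0 \<or> p = 1 \<or> p = 2 \<or> p = 3" "q = 0 \<or> q = 1 \<or> q = 2 \<or> q = 3" using p q by arith+
  thus ?thesis using s1 s2 s3 x y by (auto simp: FB_simps)
qed

lemma trace_Qsum:
  assumes Phi: "Phi \<in> carrier_mat (4*M) (4*M)"
    and sym: "\<And>a b. a < 4*M \<Longrightarrow> b < 4*M \<Longrightarrow> Phi $$ (a,b) = Phi $$ (b,a)"
    and X: "X \<in> carrier_mat Nt Nt"
  shows "Re (mtrace (Qsum M S Phi * X)) = mtrace (Phi * block4 M (FB S X))"
proof -
  have [simp]: "dim_row X = Nt" "dim_col X = Nt" using X by auto
  define P where "P = (\<lambda>p q. cmat (blk M Phi p q))"
  have cP: "\<And>p q. P p q \<in> carrier_mat M M" by (auto simp: P_def intro!: carrier_matI)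
  have cP2: "(2::complex) \<cdot>\<^sub>m P 0 2 + (2 * \<i>) \<cdot>\<^sub>m P 0 3 \<in> carrier_mat M M"
    "(2::complex) \<cdot>\<^sub>m P 1 2 + (2 * \<i>) \<cdot>\<^sub>m P 1 3 \<in> carrier_mat M M"
    "P 2 2 + P 3 3 + (2 * \<i>) \<cdot>\<^sub>m P 2 3 \<in> carrier_mat M M"
    by (auto simp: P_def intro!: carrier_matI)
  define F11 where "F11 = Fab S X (dAth S) (dBth S) (dAth S) (dBth S)"
  define F12 where "F12 = Fab S X (dAth S) (dBth S) (dAph S) (dBph S)"
  define F22 where "F22 = Fab S X (dAph S) (dBph S) (dAph S) (dBph S)"
  define F13 where "F13 = F3 S X (dAth S) (dBth S)"
  define F23 where "F23 = F3 S X (dAph S) (dBph S)"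
  define G where "G = F33 S X"
  have [simp]: "dim_row F11 = M" "dim_col F11 = M" "dim_row F12 = M" "dim_col F12 = M"
    "dim_row F22 = M" "dim_col F22 = M" "dim_row F13 = M" "dim_col F13 = M"
    "dim_row F23 = M" "dim_col F23 = M" "dim_row G = M" "dim_col G = M"
    by (simp_all add: F11_def F12_def F22_def F13_def F23_def G_def)
  define Q11 where "Q11 = Qab S (P 0 0) (dAth S) (dBth S) (dAth S) (dBth S)"
  define Q12 where "Q12 = Qab S (P 0 1) (dAth S) (dBth S) (dAph S) (dBph S)"
  define Q22 where "Q22 = Qab S (P 1 1) (dAph S) (dBph S) (dAph S) (dBph S)"
  define Q13 where "Q13 = Q3 S ((2::complex) \<cdot>\<^sub>m P 0 2 + (2 * \<i>) \<cdot>\<^sub>m P 0 3) (dAth S) (dBth S)"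
  define Q23 where "Q23 = Q3 S ((2::complex) \<cdot>\<^sub>m P 1 2 + (2 * \<i>) \<cdot>\<^sub>m P 1 3) (dAph S) (dBph S)"
  define Q33 where "Q33 = Am S * (hadamard (P 2 2 + P 3 3 + (2 * \<i>) \<cdot>\<^sub>m P 2 3) (mat_adjoint (Bm S) * Bm S)) * mat_adjoint (Am S)"
  have [simp]: "dim_row Q11 = Nt" "dim_col Q11 = Nt" "dim_row Q12 = Nt" "dim_col Q12 = Nt"
    "dim_row Q22 = Nt" "dim_col Q22 = Nt" "dim_row Q13 = Nt" "dim_col Q13 = Nt"
    "dim_row Q23 = Nt" "dim_col Q23 = Nt" "dim_row Q33 = Nt" "dim_col Q33 = Nt"
    by (simp_all add: Q11_def Q12_def Q22_def Q13_def Q23_def Q33_def Qab_def Q3_def Let_def)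
  have t11: "mtrace (Q11 * X) = hs M (P 0 0) F11" unfolding Q11_def F11_def by (rule trace_Qab[OF cP X cAt cAt cBt cBt])
  have t12: "mtrace (Q12 * X) = hs M (P 0 1) F12" unfolding Q12_def F12_def by (rule trace_Qab[OF cP X cAt cAp cBt cBp])
  have t22: "mtrace (Q22 * X) = hs M (P 1 1) F22" unfolding Q22_def F22_def by (rule trace_Qab[OF cP X cAp cAp cBp cBp])
  have t13: "mtrace (Q13 * X) = hs M ((2::complex) \<cdot>\<^sub>m P 0 2 + (2 * \<i>) \<cdot>\<^sub>m P 0 3) F13"
    unfolding Q13_def F13_def by (rule trace_Q3[OF cP2(1) X cAt cBt])
  have t23: "mtrace (Q23 * X) = hs M ((2::complex) \<cdot>\<^sub>m P 1 2 + (2 * \<i>) \<cdot>\<^sub>m P 1 3) F23"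
    unfolding Q23_def F23_def by (rule trace_Q3[OF cP2(2) X cAp cBp])
  have t33: "mtrace (Q33 * X) = hs M (P 2 2 + P 3 3 + (2 * \<i>) \<cdot>\<^sub>m P 2 3) G"
    unfolding Q33_def G_def by (rule trace_Q33[OF cP2(3) X])
  have QS: "Qsum M S Phi = Q11 + 2 \<cdot>\<^sub>m Q12 + Q13 + Q22 + Q23 + Q33"
    unfolding Qsum_def Let_def P_def[symmetric] Q11_def Q12_def Q13_def Q22_def Q23_def Q33_def ..
  have "mtrace (Qsum M S Phi * X) = mtrace (Q11 * X) + 2 * mtrace (Q12 * X) + mtrace (Q13 * X)
      + mtrace (Q22 * X) + mtrace (Q23 * X) + mtrace (Q33 * X)"
    unfolding QS by (simp add: add_mult' mtrace_add' mult_smult_left' mtrace_smult)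
  also have "\<dots> = (\<Sum>x<M. \<Sum>y<M. P 0 0 $$ (x,y) * F11 $$ (x,y) + 2 * (P 0 1 $$ (x,y) * F12 $$ (x,y))
      + ((2::complex) \<cdot>\<^sub>m P 0 2 + (2 * \<i>) \<cdot>\<^sub>m P 0 3) $$ (x,y) * F13 $$ (x,y)
      + P 1 1 $$ (x,y) * F22 $$ (x,y)
      + ((2::complex) \<cdot>\<^sub>m P 1 2 + (2 * \<i>) \<cdot>\<^sub>m P 1 3) $$ (x,y) * F23 $$ (x,y)
      + (P 2 2 + P 3 3 + (2 * \<i>) \<cdot>\<^sub>m P 2 3) $$ (x,y) * G $$ (x,y))"
    unfolding t11 t12 t13 t22 t23 t33 hs_def by (simp add: sum.distrib sum_distrib_left)
  finally have L1: "Re (mtrace (Qsum M S Phi * X)) = (\<Sum>x<M. \<Sum>y<M. Re (P 0 0 $$ (x,y) * F11 $$ (x,y) + 2 * (P 0 1 $$ (x,y) * F12 $$ (x,y))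
      + ((2::complex) \<cdot>\<^sub>m P 0 2 + (2 * \<i>) \<cdot>\<^sub>m P 0 3) $$ (x,y) * F13 $$ (x,y)
      + P 1 1 $$ (x,y) * F22 $$ (x,y)
      + ((2::complex) \<cdot>\<^sub>m P 1 2 + (2 * \<i>) \<cdot>\<^sub>m P 1 3) $$ (x,y) * F23 $$ (x,y)
      + (P 2 2 + P 3 3 + (2 * \<i>) \<cdot>\<^sub>m P 2 3) $$ (x,y) * G $$ (x,y)))"
    by (simp only: Re_sum)
  define ph where "ph = (\<lambda>p q x y. Phi $$ (p*M+x, q*M+y))"
  define T where "T = (\<lambda>x y. ph 0 0 x y * Re (F11 $$ (x,y)) + 2 * ph 0 1 x y * Re (F12 $$ (x,y))
     + 2 * ph 0 2 x y * Re (F13 $$ (x,y)) - 2 * ph 0 3 x y * Im (F13 $$ (x,y))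
     + ph 1 1 x y * Re (F22 $$ (x,y)) + 2 * ph 1 2 x y * Re (F23 $$ (x,y)) - 2 * ph 1 3 x y * Im (F23 $$ (x,y))
     + (ph 2 2 x y + ph 3 3 x y) * Re (G $$ (x,y)) - 2 * ph 2 3 x y * Im (G $$ (x,y)))"
  have L2: "Re (mtrace (Qsum M S Phi * X)) = (\<Sum>x<M. \<Sum>y<M. T x y)"
    unfolding L1 
  proof (intro sum.cong refl)
    fix x y assume "x \<in> {..<M}" "y \<in> {..<M}"
    hence x: "x < M" and y: "y < M" by auto
    show "Re (P 0 0 $$ (x,y) * F11 $$ (x,y) + 2 * (P 0 1 $$ (x,y) * F12 $$ (x,y))
      + ((2::complex) \<cdot>\<^sub>m P 0 2 + (2 * \<i>) \<cdot>\<^sub>m P 0 3) $$ (x,y) * F13 $$ (x,y)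
      + P 1 1 $$ (x,y) * F22 $$ (x,y)
      + ((2::complex) \<cdot>\<^sub>m P 1 2 + (2 * \<i>) \<cdot>\<^sub>m P 1 3) $$ (x,y) * F23 $$ (x,y)
      + (P 2 2 + P 3 3 + (2 * \<i>) \<cdot>\<^sub>m P 2 3) $$ (x,y) * G $$ (x,y)) = T x y"
      using x y by (simp add: T_def ph_def P_def algebra_simps)
  qed
  define gg where "gg = (\<lambda>p q. \<Sum>x<M. \<Sum>y<M. Phi $$ (p*M+x, q*M+y) * FB S X q p $$ (y,x))"
  define hh where "hh = (\<lambda>p q. \<Sum>x<M. \<Sum>y<M. Phi $$ (q*M+x, p*M+y) * FB S X q p $$ (x,y))"
  have low: "gg p q = hh p q" if "p < 4" "q < 4" for p q
    unfolding gg_def hh_def by (rule sym_swap[OF sym that])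
  have R1: "mtrace (Phi * block4 M (FB S X)) = (\<Sum>p<4. \<Sum>q<4. gg p q)"
    unfolding gg_def by (rule trace_block4[OF Phi])
  also have "\<dots> = gg 0 0 + gg 0 1 + gg 0 2 + gg 0 3 + gg 1 0 + gg 1 1 + gg 1 2 + gg 1 3
     + gg 2 0 + gg 2 1 + gg 2 2 + gg 2 3 + gg 3 0 + gg 3 1 + gg 3 2 + gg 3 3"
    by (simp add: eval_nat_numeral add_ac)
  also have "\<dots> = hh 0 0 + gg 0 1 + gg 0 2 + gg 0 3 + hh 1 0 + hh 1 1 + gg 1 2 + gg 1 3
     + hh 2 0 + hh 2 1 + hh 2 2 + gg 2 3 + hh 3 0 + hh 3 1 + hh 3 2 + hh 3 3"
    by (simp add: low)
  also have "\<dots> = (\<Sum>x<M. \<Sum>y<M.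
       Phi $$ (0*M+x, 0*M+y) * FB S X 0 0 $$ (x,y) + Phi $$ (0*M+x, 1*M+y) * FB S X 1 0 $$ (y,x)
     + Phi $$ (0*M+x, 2*M+y) * FB S X 2 0 $$ (y,x) + Phi $$ (0*M+x, 3*M+y) * FB S X 3 0 $$ (y,x)
     + Phi $$ (0*M+x, 1*M+y) * FB S X 0 1 $$ (x,y) + Phi $$ (1*M+x, 1*M+y) * FB S X 1 1 $$ (x,y)
     + Phi $$ (1*M+x, 2*M+y) * FB S X 2 1 $$ (y,x) + Phi $$ (1*M+x, 3*M+y) * FB S X 3 1 $$ (y,x)
     + Phi $$ (0*M+x, 2*M+y) * FB S X 0 2 $$ (x,y) + Phi $$ (1*M+x, 2*M+y) * FB S X 1 2 $$ (x,y)
     + Phi $$ (2*M+x, 2*M+y) * FB S X 2 2 $$ (x,y) + Phi $$ (2*M+x, 3*M+y) * FB S X 3 2 $$ (y,x)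
     + Phi $$ (0*M+x, 3*M+y) * FB S X 0 3 $$ (x,y) + Phi $$ (1*M+x, 3*M+y) * FB S X 1 3 $$ (x,y)
     + Phi $$ (2*M+x, 3*M+y) * FB S X 2 3 $$ (x,y) + Phi $$ (3*M+x, 3*M+y) * FB S X 3 3 $$ (x,y))"
    unfolding gg_def hh_def by (simp only: sum.distrib)
  also have "\<dots> = (\<Sum>x<M. \<Sum>y<M. T x y)"
  proof (intro sum.cong refl)
    fix x y assume "x \<in> {..<M}" "y \<in> {..<M}"
    hence x: "x < M" and y: "y < M" by auto
    show "Phi $$ (0*M+x, 0*M+y) * FB S X 0 0 $$ (x,y) + Phi $$ (0*M+x, 1*M+y) * FB S X 1 0 $$ (y,x)
     + Phi $$ (0*M+x, 2*M+y) * FB S X 2 0 $$ (y,x) + Phi $$ (0*M+x, 3*M+y) * FB S X 3 0 $$ (y,x)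
     + Phi $$ (0*M+x, 1*M+y) * FB S X 0 1 $$ (x,y) + Phi $$ (1*M+x, 1*M+y) * FB S X 1 1 $$ (x,y)
     + Phi $$ (1*M+x, 2*M+y) * FB S X 2 1 $$ (y,x) + Phi $$ (1*M+x, 3*M+y) * FB S X 3 1 $$ (y,x)
     + Phi $$ (0*M+x, 2*M+y) * FB S X 0 2 $$ (x,y) + Phi $$ (1*M+x, 2*M+y) * FB S X 1 2 $$ (x,y)
     + Phi $$ (2*M+x, 2*M+y) * FB S X 2 2 $$ (x,y) + Phi $$ (2*M+x, 3*M+y) * FB S X 3 2 $$ (y,x)
     + Phi $$ (0*M+x, 3*M+y) * FB S X 0 3 $$ (x,y) + Phi $$ (1*M+x, 3*M+y) * FB S X 1 3 $$ (x,y)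
     + Phi $$ (2*M+x, 3*M+y) * FB S X 2 3 $$ (x,y) + Phi $$ (3*M+x, 3*M+y) * FB S X 3 3 $$ (x,y) = T x y"
      using x y by (simp add: T_def ph_def FB_simps F11_def[symmetric] F12_def[symmetric] F22_def[symmetric]
          F13_def[symmetric] F23_def[symmetric] G_def[symmetric] algebra_simps)
  qed
  finally show ?thesis using L2 by simp
qed

end


lemma isCont_det:
  assumes G: "\<And>t. (G t :: real mat) \<in> carrier_mat n n"
    and c: "\<And>i j. i < n \<Longrightarrow> j < n \<Longrightarrow> isCont (\<lambda>t. G t $$ (i,j)) x"
  shows "isCont (\<lambda>t. det (G t)) x"
proof -
  have e: "(\<lambda>t. det (G t)) = (\<lambda>t. \<Sum>p \<in> {p. p permutes {0..<n}}. signof p * (\<Prod>i = 0..<n. G t $$ (i, p i)))"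
    by (intro ext det_def'[OF G])
  show ?thesis unfolding e
  proof (intro continuous_sum continuous_mult continuous_const continuous_prod)
    fix p i assume p: "p \<in> {p. p permutes {0..<n}}" and i: "i \<in> {0..<n}"
    have "p i \<in> {0..<n}" using p i permutes_in_image by fastforce
    thus "isCont (\<lambda>t. G t $$ (i, p i)) x" using i c by auto
  qed
qed

lemma minv_props:
  assumes A: "(A::real mat) \<in> carrier_mat n n" and d: "det A \<noteq> 0"
  shows "minv A \<in> carrier_mat n n" "A * minv A = 1\<^sub>m n" "minv A * A = 1\<^sub>m n"
    "minv A = (1 / det A) \<cdot>\<^sub>m adj_mat A"
proof -
  have U: "A \<in> Units (ring_mat TYPE(real) n undefined)" by (rule det_non_zero_imp_unit[OF A d])
  obtain B where B: "mat_inverse A = Some B"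
    using mat_inverse(1)[OF A, of undefined] U by (cases "mat_inverse A") auto
  have mB: "minv A = B" using B by (simp add: minv_def)
  from mat_inverse(2)[OF A B] have AB: "A * B = 1\<^sub>m n" "B * A = 1\<^sub>m n" "B \<in> carrier_mat n n" by auto
  show "minv A \<in> carrier_mat n n" "A * minv A = 1\<^sub>m n" "minv A * A = 1\<^sub>m n" using AB mB by auto
  have adjA: "A * adj_mat A = det A \<cdot>\<^sub>m 1\<^sub>m n" "adj_mat A \<in> carrier_mat n n" using adj_mat[OF A] by auto
  have "B = B * 1\<^sub>m n" using AB by simp
  also have "1\<^sub>m n = A * ((1 / det A) \<cdot>\<^sub>m adj_mat A)"
  proof -
    have "A * ((1 / det A) \<cdot>\<^sub>m adj_mat A) = (1/det A) \<cdot>\<^sub>m (A * adj_mat A)"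
      by (rule mult_smult_distrib[OF A adjA(2)])
    also have "\<dots> = 1\<^sub>m n" unfolding adjA(1) using d by (intro eq_matI) auto
    finally show ?thesis by simp
  qed
  also have "B * (A * ((1 / det A) \<cdot>\<^sub>m adj_mat A)) = (B * A) * ((1 / det A) \<cdot>\<^sub>m adj_mat A)"
    using AB(3) A adjA(2) by (metis assoc_mult_mat smult_carrier_mat)
  also have "\<dots> = (1 / det A) \<cdot>\<^sub>m adj_mat A" using AB adjA by simp
  finally show "minv A = (1 / det A) \<cdot>\<^sub>m adj_mat A" using mB by simp
qed

lemma invertible_det: assumes "invertible_mat (A::real mat)" "A \<in> carrier_mat n n" shows "det A \<noteq> 0"
proof -
  obtain B where B: "A * B = 1\<^sub>m (dim_row A)" "B * A = 1\<^sub>m (dim_row B)"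
    using assms unfolding invertible_mat_def inverts_mat_def by auto
  have "dim_col B = n" using arg_cong[OF B(1), of dim_col] assms(2) by simp
  moreover have "dim_row B = n" using arg_cong[OF B(2), of dim_col] assms by simp
  ultimately have cB: "B \<in> carrier_mat n n" by auto
  have "det A * det B = 1" using det_mult[OF assms(2) cB] B assms by simp
  thus ?thesis by auto
qed

lemma deriv_trace_inv:
  fixes F :: "real \<Rightarrow> real mat" and F0 F1 F2 :: "real mat"
  assumes cF: "\<And>t. F t \<in> carrier_mat n n"
    and F0: "F0 \<in> carrier_mat n n" and F1: "F1 \<in> carrier_mat n n" and F2: "F2 \<in> carrier_mat n n"
    and Fe: "\<And>t a b. a < n \<Longrightarrow> b < n \<Longrightarrow> F t $$ (a,b) = F0 $$ (a,b) + t * F1 $$ (a,b) + t^2 * F2 $$ (a,b)"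
    and d0: "det F0 \<noteq> 0"
  shows "((\<lambda>t. mtrace (minv (F t))) has_real_derivative - mtrace (minv F0 * F1 * minv F0)) (at 0)"
proof -
  have FF0: "F 0 = F0"
    by (rule eq_matI) (use cF F0 Fe in auto)
  have contF: "isCont (\<lambda>t. F t $$ (a,b)) x" if "a < n" "b < n" for a b x
    using Fe[OF that] by (simp add: continuous_intros)
  have cdet: "isCont (\<lambda>t. det (F t)) 0" by (rule isCont_det[OF cF contF])
  have cof: "isCont (\<lambda>t. adj_mat (F t) $$ (a,b)) 0" if ab: "a < n" "b < n" for a b
  proof -
    have e: "adj_mat (F t) $$ (a,b) = (-1)^(b+a) * det (mat_delete (F t) b a)" for t
      using cF[of t] ab by (simp add: adj_mat_def cofactor_def)
    have cd: "mat_delete (F t) b a \<in> carrier_mat (n-1) (n-1)" for t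
      by (rule mat_delete_carrier[OF cF[of t]])
    have "isCont (\<lambda>t. det (mat_delete (F t) b a)) 0"
    proof (rule isCont_det[OF cd])
      fix i j assume ij: "i < n - 1" "j < n - 1"
      have "mat_delete (F t) b a $$ (i,j) = F t $$ (if i < b then i else Suc i, if j < a then j else Suc j)" for t
        using cF[of t] ij by (simp add: mat_delete_def)
      moreover have "(if i < b then i else Suc i) < n" "(if j < a then j else Suc j) < n" using ij by auto
      ultimately show "isCont (\<lambda>t. mat_delete (F t) b a $$ (i,j)) 0" using contF by simp
    qed
    thus ?thesis unfolding e by (intro continuous_intros)
  qed
  have ev: "eventually (\<lambda>t. det (F t) \<noteq> 0) (at 0)"
    using tendsto_imp_eventually_ne[OF cdet[unfolded isCont_def] ] d0 FF0
    by (metis eventually_at_filter isCont_def tendsto_imp_eventually_ne eventually_mono)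
  define G0 where "G0 = minv F0"
  have G0: "G0 \<in> carrier_mat n n" "F0 * G0 = 1\<^sub>m n" "G0 * F0 = 1\<^sub>m n" "G0 = (1 / det F0) \<cdot>\<^sub>m adj_mat F0"
    using minv_props[OF F0 d0] by (auto simp: G0_def)
  have limG: "((\<lambda>t. minv (F t) $$ (a,b)) \<longlongrightarrow> G0 $$ (a,b)) (at 0)" if ab: "a < n" "b < n" for a b
  proof -
    have "((\<lambda>t. (1 / det (F t)) * adj_mat (F t) $$ (a,b)) \<longlongrightarrow> (1 / det (F 0)) * adj_mat (F 0) $$ (a,b)) (at 0)"
      using cdet cof[OF ab] d0 FF0 unfolding isCont_def by (intro tendsto_intros) auto
    moreover have "(1 / det (F 0)) * adj_mat (F 0) $$ (a,b) = G0 $$ (a,b)"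
      using G0(4) FF0 ab F0 adj_mat(1)[OF F0] by auto
    moreover have "eventually (\<lambda>t. minv (F t) $$ (a,b) = (1 / det (F t)) * adj_mat (F t) $$ (a,b)) (at 0)"
      using ev
    proof (rule eventually_mono)
      fix t assume "det (F t) \<noteq> 0"
      thus "minv (F t) $$ (a,b) = (1 / det (F t)) * adj_mat (F t) $$ (a,b)"
        using minv_props(4)[OF cF[of t]] ab adj_mat(1)[OF cF[of t]] by auto
    qed
    ultimately show ?thesis by (simp add: tendsto_cong)
  qed
  define D where "D = - (\<Sum>a<n. \<Sum>d<n. \<Sum>c<n. G0 $$ (a,c) * F1 $$ (c,d) * G0 $$ (d,a))"
  have lim: "((\<lambda>t. - (\<Sum>a<n. \<Sum>d<n. \<Sum>c<n. minv (F t) $$ (a,c) * (F1 $$ (c,d) + t * F2 $$ (c,d)) * G0 $$ (d,a))) \<longlongrightarrow> D) (at 0)"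
  proof -
    have "((\<lambda>t. - (\<Sum>a<n. \<Sum>d<n. \<Sum>c<n. minv (F t) $$ (a,c) * (F1 $$ (c,d) + t * F2 $$ (c,d)) * G0 $$ (d,a))) \<longlongrightarrow>
       - (\<Sum>a<n. \<Sum>d<n. \<Sum>c<n. G0 $$ (a,c) * (F1 $$ (c,d) + 0 * F2 $$ (c,d)) * G0 $$ (d,a))) (at 0)"
      by (intro tendsto_intros limG) auto
    thus ?thesis by (simp add: D_def)
  qed
  have eq: "eventually (\<lambda>t. (mtrace (minv (F t)) - mtrace (minv (F 0))) / (t - 0) =
      - (\<Sum>a<n. \<Sum>d<n. \<Sum>c<n. minv (F t) $$ (a,c) * (F1 $$ (c,d) + t * F2 $$ (c,d)) * G0 $$ (d,a))) (at 0)"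
  proof -
    have nz: "eventually (\<lambda>t. t \<noteq> 0) (at (0::real))" by (simp add: eventually_at_filter)
    show ?thesis
    using eventually_conj[OF nz ev]
  proof (rule eventually_mono)
    fix t assume h: "t \<noteq> 0 \<and> det (F t) \<noteq> 0"
    show "(mtrace (minv (F t)) - mtrace (minv (F 0))) / (t - 0) =
      - (\<Sum>a<n. \<Sum>d<n. \<Sum>c<n. minv (F t) $$ (a,c) * (F1 $$ (c,d) + t * F2 $$ (c,d)) * G0 $$ (d,a))"
    proof -
      have t: "t \<noteq> 0" and dt: "det (F t) \<noteq> 0" using h by auto
      define Gt where "Gt = minv (F t)"
      have Gt: "Gt \<in> carrier_mat n n" "Gt * F t = 1\<^sub>m n" using minv_props[OF cF[of t] dt] by (auto simp: Gt_def)
      have key: "Gt - G0 = Gt * (F0 - F t) * G0"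
      proof -
        have a1: "Gt * (F0 - F t) = Gt * F0 - Gt * F t" using Gt F0 cF[of t] by (simp add: mult_minus_distrib_mat)
        have a2: "(Gt * F0 - Gt * F t) * G0 = Gt * F0 * G0 - Gt * F t * G0"
          using Gt F0 cF[of t] G0(1) by (simp add: minus_mult_distrib_mat[of _ n n _ _ n])
        have a3: "Gt * F0 * G0 = Gt" using Gt F0 G0(1,2) by (simp add: assoc_mult_mat[of Gt n n F0 n G0 n])
        have a4: "Gt * F t * G0 = G0" unfolding Gt(2) using G0(1) by (rule left_mult_one_mat)
        show ?thesis unfolding a1 a2 a3 a4 ..
      qed
      have "mtrace Gt - mtrace G0 = (\<Sum>a<n. (Gt - G0) $$ (a,a))"
        using Gt G0(1) by (simp add: mtrace_def sum_subtractf)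
      also have "\<dots> = (\<Sum>a<n. \<Sum>d<n. \<Sum>c<n. Gt $$ (a,c) * (F0 $$ (c,d) - F t $$ (c,d)) * G0 $$ (d,a))"
        unfolding key using Gt G0(1) F0 cF[of t]
        by (auto simp: scalar_prod_def atLeast0LessThan sum_distrib_right intro!: sum.cong)
      also have "\<dots> = (\<Sum>a<n. \<Sum>d<n. \<Sum>c<n. - t * (Gt $$ (a,c) * (F1 $$ (c,d) + t * F2 $$ (c,d)) * G0 $$ (d,a)))"
        by (intro sum.cong refl) (simp add: Fe power2_eq_square algebra_simps)
      also have "\<dots> = - t * (\<Sum>a<n. \<Sum>d<n. \<Sum>c<n. Gt $$ (a,c) * (F1 $$ (c,d) + t * F2 $$ (c,d)) * G0 $$ (d,a))"
        by (simp only: sum_distrib_left)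
      finally have "(mtrace Gt - mtrace G0) / t = - (\<Sum>a<n. \<Sum>d<n. \<Sum>c<n. Gt $$ (a,c) * (F1 $$ (c,d) + t * F2 $$ (c,d)) * G0 $$ (d,a))"
        using t by simp
      thus "(mtrace (minv (F t)) - mtrace (minv (F 0))) / (t - 0) =
        - (\<Sum>a<n. \<Sum>d<n. \<Sum>c<n. minv (F t) $$ (a,c) * (F1 $$ (c,d) + t * F2 $$ (c,d)) * G0 $$ (d,a))"
        by (simp add: Gt_def FF0 G0_def)
    qed
  qed
  qed
  have "((\<lambda>t. mtrace (minv (F t))) has_real_derivative D) (at 0)"
    unfolding has_field_derivative_iff using tendsto_cong[OF eq] lim by simp
  moreover have sw: "(\<Sum>a<n. \<Sum>d<n. \<Sum>c<n. G0 $$ (a,c) * F1 $$ (c,d) * G0 $$ (d,a)) =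
     (\<Sum>a<n. \<Sum>c<n. \<Sum>d<n. G0 $$ (a,c) * F1 $$ (c,d) * G0 $$ (d,a))"
    by (rule sum.cong[OF refl], rule sum.swap)
  moreover have "D = - mtrace (minv F0 * F1 * minv F0)"
    unfolding D_def sw using G0(1) F1 by (simp add: G0_def[symmetric] mtrace_def scalar_prod_def atLeast0LessThan
        sum_distrib_left sum_distrib_right ac_simps)
  ultimately show ?thesis by metis
qed


context sset begin

lemma Fab_lin:
  assumes R0: "R0 \<in> carrier_mat Nt Nt" and X: "X \<in> carrier_mat Nt Nt" and Y: "Y \<in> carrier_mat Nt Nt"
    and a1: "dA1 \<in> carrier_mat Nt M" and a2: "dA2 \<in> carrier_mat Nt M"
    and b1: "dB1 \<in> carrier_mat Nr M" and b2: "dB2 \<in> carrier_mat Nr M" and x: "x < M" and y: "y < M"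
  shows "Fab S (R0 + a \<cdot>\<^sub>m X + b \<cdot>\<^sub>m Y) dA1 dB1 dA2 dB2 $$ (x,y) =
    Fab S R0 dA1 dB1 dA2 dB2 $$ (x,y) + a * Fab S X dA1 dB1 dA2 dB2 $$ (x,y) + b * Fab S Y dA1 dB1 dA2 dB2 $$ (x,y)"
proof -
  have [simp]: "dim_row R0 = Nt" "dim_col R0 = Nt" "dim_row X = Nt" "dim_col X = Nt" "dim_row Y = Nt" "dim_col Y = Nt"
    "dim_row dA1 = Nt" "dim_col dA1 = M" "dim_row dA2 = Nt" "dim_col dA2 = M"
    "dim_row dB1 = Nr" "dim_col dB1 = M" "dim_row dB2 = Nr" "dim_col dB2 = M"
    using assms by auto
  show ?thesis using x y
    by (simp add: Fab_def Let_def mult_add' add_mult' mult_smult_right' mult_smult_left' algebra_simps)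
qed

lemma F3_lin:
  assumes R0: "R0 \<in> carrier_mat Nt Nt" and X: "X \<in> carrier_mat Nt Nt" and Y: "Y \<in> carrier_mat Nt Nt"
    and a1: "dA \<in> carrier_mat Nt M" and b1: "dB \<in> carrier_mat Nr M" and x: "x < M" and y: "y < M"
  shows "F3 S (R0 + a \<cdot>\<^sub>m X + b \<cdot>\<^sub>m Y) dA dB $$ (x,y) =
    F3 S R0 dA dB $$ (x,y) + a * F3 S X dA dB $$ (x,y) + b * F3 S Y dA dB $$ (x,y)"
proof -
  have [simp]: "dim_row R0 = Nt" "dim_col R0 = Nt" "dim_row X = Nt" "dim_col X = Nt" "dim_row Y = Nt" "dim_col Y = Nt"
    "dim_row dA = Nt" "dim_col dA = M" "dim_row dB = Nr" "dim_col dB = M"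
    using assms by auto
  show ?thesis using x y
    by (simp add: F3_def Let_def mult_add' add_mult' mult_smult_right' mult_smult_left' algebra_simps)
qed

lemma F33_lin:
  assumes R0: "R0 \<in> carrier_mat Nt Nt" and X: "X \<in> carrier_mat Nt Nt" and Y: "Y \<in> carrier_mat Nt Nt"
    and x: "x < M" and y: "y < M"
  shows "F33 S (R0 + a \<cdot>\<^sub>m X + b \<cdot>\<^sub>m Y) $$ (x,y) =
    F33 S R0 $$ (x,y) + a * F33 S X $$ (x,y) + b * F33 S Y $$ (x,y)"
proof -
  have [simp]: "dim_row R0 = Nt" "dim_col R0 = Nt" "dim_row X = Nt" "dim_col X = Nt" "dim_row Y = Nt" "dim_col Y = Nt"
    using assms by auto
  show ?thesis using x y
    by (simp add: F33_def Let_def mult_add' add_mult' mult_smult_right' mult_smult_left' algebra_simps)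
qed

lemma FB_lin:
  assumes R0: "R0 \<in> carrier_mat Nt Nt" and X: "X \<in> carrier_mat Nt Nt" and Y: "Y \<in> carrier_mat Nt Nt"
    and p: "p < 4" and q: "q < 4" and x: "x < M" and y: "y < M"
  shows "FB S (R0 + complex_of_real t \<cdot>\<^sub>m X + complex_of_real s \<cdot>\<^sub>m Y) p q $$ (x,y) =
    FB S R0 p q $$ (x,y) + t * FB S X p q $$ (x,y) + s * FB S Y p q $$ (x,y)"
proof -
  note l1 = Fab_lin[OF R0 X Y cAt cAt cBt cBt] Fab_lin[OF R0 X Y cAt cAp cBt cBp] Fab_lin[OF R0 X Y cAp cAp cBp cBp]
    F3_lin[OF R0 X Y cAt cBt] F3_lin[OF R0 X Y cAp cBp] F33_lin[OF R0 X Y]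
  have "p = 0 \<or> p = 1 \<or> p = 2 \<or> p = 3" "q = 0 \<or> q = 1 \<or> q = 2 \<or> q = 3" using p q by arith+
  thus ?thesis using x y
    by (elim disjE) (simp_all add: FB_simps l1 algebra_simps)
qed

end

lemma adj_herm: "mat_adjoint (W * mat_adjoint (W::complex mat)) = W * mat_adjoint W"
  by (simp add: adj_mult')

lemma pert_eq: assumes "i < dim_row W" "j < dim_col W"
  shows "pert W i j (complex_of_real t * c) = W + complex_of_real t \<cdot>\<^sub>m Matrix.mat (dim_row W) (dim_col W) (\<lambda>(a,b). if a = i \<and> b = j then c else 0)"
  by (rule eq_matI) (auto simp: pert_def)

lemma R_expand:
  assumes W: "(W::complex mat) \<in> carrier_mat n m" and E: "E \<in> carrier_mat n m"
  shows "(W + complex_of_real t \<cdot>\<^sub>m E) * mat_adjoint (W + complex_of_real t \<cdot>\<^sub>m E) =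
    W * mat_adjoint W + complex_of_real t \<cdot>\<^sub>m (E * mat_adjoint W + W * mat_adjoint E)
      + complex_of_real (t^2) \<cdot>\<^sub>m (E * mat_adjoint E)"
proof -
  have [simp]: "dim_row W = n" "dim_col W = m" "dim_row E = n" "dim_col E = m" using assms by auto
  show ?thesis
    by (rule eq_matI)
      (simp_all add: adj_add' adj_smult mult_add' add_mult' mult_smult_right' mult_smult_left' algebra_simps power2_eq_square)
qed

lemma fisher_dims[simp]: "dim_row (fisher M L s2s S W) = 4*M" "dim_col (fisher M L s2s S W) = 4*M"
  by (simp_all add: fisher_FB)

context sset begin

lemma fisher_poly:
  assumes W: "W \<in> carrier_mat Nt n" and E: "E \<in> carrier_mat Nt n" and ab: "a < 4*M" "b < 4*M"
  shows "fisher M L s2s S (W + complex_of_real t \<cdot>\<^sub>m E) $$ (a,b) =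
     fisher M L s2s S W $$ (a,b)
     + t * ((2 * real L / s2s) \<cdot>\<^sub>m block4 M (FB S (E * mat_adjoint W + W * mat_adjoint E))) $$ (a,b)
     + t^2 * ((2 * real L / s2s) \<cdot>\<^sub>m block4 M (FB S (E * mat_adjoint E))) $$ (a,b)"
proof -
  have [simp]: "dim_row W = Nt" "dim_col W = n" "dim_row E = Nt" "dim_col E = n" using assms by auto
  have c: "W * mat_adjoint W \<in> carrier_mat Nt Nt" "E * mat_adjoint W + W * mat_adjoint E \<in> carrier_mat Nt Nt"
     "E * mat_adjoint E \<in> carrier_mat Nt Nt" by (auto intro!: carrier_matI)
  have pq: "a div M < 4" "b div M < 4" "a mod M < M" "b mod M < M"
    using ab by (simp_all add: less_mult_imp_div_less mult.commute)
  show ?thesis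
    unfolding fisher_FB R_expand[OF W E] using ab
    by (simp add: block4_index FB_lin[OF c pq] algebra_simps del: of_real_power)
qed

lemma fisher_sym:
  assumes W: "W \<in> carrier_mat Nt n" and ab: "a < 4*M" "b < 4*M"
  shows "fisher M L s2s S W $$ (a,b) = fisher M L s2s S W $$ (b,a)"
proof -
  have c: "W * mat_adjoint W \<in> carrier_mat Nt Nt" using W by (auto intro!: carrier_matI)
  have pq: "a div M < 4" "b div M < 4" "a mod M < M" "b mod M < M"
    using ab by (simp_all add: less_mult_imp_div_less mult.commute)
  show ?thesis unfolding fisher_FB using ab
    by (simp add: block4_index FB_sym[OF c adj_herm pq])
qed

end

lemma minv_sym:
  assumes A: "(A::real mat) \<in> carrier_mat n n" and d: "det A \<noteq> 0" and s: "A\<^sup>T = A"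
  shows "(minv A)\<^sup>T = minv A"
proof -
  note G = minv_props[OF A d]
  have cGT: "(minv A)\<^sup>T \<in> carrier_mat n n" using G(1) by auto
  have "(minv A)\<^sup>T * A = (A * minv A)\<^sup>T"
    using transpose_mult[OF A G(1)] s by simp
  also have "\<dots> = 1\<^sub>m n" using G(2) by simp
  finally have l: "(minv A)\<^sup>T * A = 1\<^sub>m n" .
  have "(minv A)\<^sup>T = (minv A)\<^sup>T * (A * minv A)" using G(2) cGT by simp
  also have "\<dots> = ((minv A)\<^sup>T * A) * minv A" using cGT A G(1) by (simp add: assoc_mult_mat[of _ n n A n "minv A" n])
  also have "\<dots> = minv A" using l G(1) by simp
  finally show ?thesis .
qed

lemma sum_delta_l: "(j::nat) < n \<Longrightarrow> (\<Sum>k = 0..<n. (if k = j then c else 0) * f k) = c * (f j :: complex)"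
  by (subst sum.remove[of _ j]) auto
lemma sum_delta_r: "(j::nat) < n \<Longrightarrow> (\<Sum>k = 0..<n. f k * (if k = j then c else 0)) = f j * (c :: complex)"
  by (subst sum.remove[of _ j]) auto

lemma trace_X:
  assumes Q: "(Q::complex mat) \<in> carrier_mat n n" and W: "W \<in> carrier_mat n m" and i: "i < n" and j: "j < m"
  shows "Re (mtrace (Q * (Matrix.mat n m (\<lambda>(a,b). if a = i \<and> b = j then c else 0) * mat_adjoint W
      + W * mat_adjoint (Matrix.mat n m (\<lambda>(a,b). if a = i \<and> b = j then c else 0)))))
    = Re (cnj c * ((Q + mat_adjoint Q) * W) $$ (i,j))"
proof -
  define E where "E = Matrix.mat n m (\<lambda>(a,b). if a = i \<and> b = j then c else 0)"
  have [simp]: "dim_row Q = n" "dim_col Q = n" "dim_row W = n" "dim_col W = m" "dim_row E = n" "dim_col E = m"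
    using assms by (auto simp: E_def)
  have Xe: "(E * mat_adjoint W + W * mat_adjoint E) $$ (b,a) =
     (if b = i then c * cnj (W $$ (a,j)) else 0) + (if a = i then W $$ (b,j) * cnj c else 0)" if "a < n" "b < n" for a b
  proof -
    have "(E * mat_adjoint W) $$ (b,a) = (\<Sum>k = 0..<m. (if k = j then (if b = i then c else 0) else 0) * cnj (W $$ (a,k)))"
      using that by (auto simp: scalar_prod_def E_def intro!: sum.cong)
    also have "\<dots> = (if b = i then c * cnj (W $$ (a,j)) else 0)"
      using sum_delta_l[OF j, of "if b = i then c else 0" "\<lambda>k. cnj (W $$ (a,k))"] by simp
    finally have 1: "(E * mat_adjoint W) $$ (b,a) = (if b = i then c * cnj (W $$ (a,j)) else 0)" .
    have "(W * mat_adjoint E) $$ (b,a) = (\<Sum>k = 0..<m. W $$ (b,k) * (if k = j then (if a = i then cnj c else 0) else 0))"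
      using that by (auto simp: scalar_prod_def E_def intro!: sum.cong)
    also have "\<dots> = (if a = i then W $$ (b,j) * cnj c else 0)"
      using sum_delta_r[OF j, of "\<lambda>k. W $$ (b,k)" "if a = i then cnj c else 0"] by simp
    finally have 2: "(W * mat_adjoint E) $$ (b,a) = (if a = i then W $$ (b,j) * cnj c else 0)" .
    show ?thesis using that 1 2 by simp
  qed
  have "mtrace (Q * (E * mat_adjoint W + W * mat_adjoint E)) =
     (\<Sum>a<n. \<Sum>b<n. Q $$ (a,b) * (E * mat_adjoint W + W * mat_adjoint E) $$ (b,a))"
    by (simp add: mtrace_def scalar_prod_def atLeast0LessThan)
  also have "\<dots> = (\<Sum>a<n. \<Sum>b<n. Q $$ (a,b) * (if b = i then c * cnj (W $$ (a,j)) else 0)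
        + (if a = i then Q $$ (a,b) * W $$ (b,j) * cnj c else 0))"
  proof (intro sum.cong refl)
    fix a b assume "a \<in> {..<n}" "b \<in> {..<n}"
    hence ab: "a < n" "b < n" by auto
    show "Q $$ (a,b) * (E * mat_adjoint W + W * mat_adjoint E) $$ (b,a) = Q $$ (a,b) * (if b = i then c * cnj (W $$ (a,j)) else 0)
        + (if a = i then Q $$ (a,b) * W $$ (b,j) * cnj c else 0)"
      unfolding Xe[OF ab] by (auto simp: distrib_left)
  qed
  also have "\<dots> = (\<Sum>a<n. Q $$ (a,i) * (c * cnj (W $$ (a,j)))) + (\<Sum>b<n. Q $$ (i,b) * W $$ (b,j) * cnj c)"
  proof -
    have s1: "(\<Sum>b<n. Q $$ (a,b) * (if b = i then c * cnj (W $$ (a,j)) else 0)) = Q $$ (a,i) * (c * cnj (W $$ (a,j)))" for a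
      using i by (subst sum.remove[of _ i]) auto
    have s2: "(\<Sum>b<n. (if a = i then Q $$ (a,b) * W $$ (b,j) * cnj c else 0)) =
        (if a = i then (\<Sum>b<n. Q $$ (i,b) * W $$ (b,j) * cnj c) else 0)" for a
      by (cases "a = i") simp_all
    have "(\<Sum>a<n. \<Sum>b<n. Q $$ (a,b) * (if b = i then c * cnj (W $$ (a,j)) else 0)
        + (if a = i then Q $$ (a,b) * W $$ (b,j) * cnj c else 0)) =
       (\<Sum>a<n. \<Sum>b<n. Q $$ (a,b) * (if b = i then c * cnj (W $$ (a,j)) else 0))
        + (\<Sum>a<n. \<Sum>b<n. (if a = i then Q $$ (a,b) * W $$ (b,j) * cnj c else 0))"
      by (simp only: sum.distrib)
    also have "\<dots> = (\<Sum>a<n. Q $$ (a,i) * (c * cnj (W $$ (a,j))))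
        + (\<Sum>a<n. (if a = i then (\<Sum>b<n. Q $$ (i,b) * W $$ (b,j) * cnj c) else 0))"
      by (simp only: s1 s2)
    also have "(\<Sum>a<n. (if a = i then (\<Sum>b<n. Q $$ (i,b) * W $$ (b,j) * cnj c) else 0)) = (\<Sum>b<n. Q $$ (i,b) * W $$ (b,j) * cnj c)"
      using i by (simp only: sum.delta finite_lessThan lessThan_iff if_True)
    finally show ?thesis .
  qed
  finally have L: "mtrace (Q * (E * mat_adjoint W + W * mat_adjoint E)) = 
     (\<Sum>a<n. Q $$ (a,i) * (c * cnj (W $$ (a,j)))) + (\<Sum>b<n. Q $$ (i,b) * W $$ (b,j) * cnj c)" .
  have R: "cnj c * ((Q + mat_adjoint Q) * W) $$ (i,j) = (\<Sum>b<n. cnj c * (Q $$ (i,b) * W $$ (b,j))) + 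
      (\<Sum>b<n. cnj c * (cnj (Q $$ (b,i)) * W $$ (b,j)))"
  proof -
    have "cnj c * ((Q + mat_adjoint Q) * W) $$ (i,j) = (\<Sum>b<n. cnj c * ((Q $$ (i,b) + cnj (Q $$ (b,i))) * W $$ (b,j)))"
      using i j by (simp add: scalar_prod_def atLeast0LessThan sum_distrib_left)
    also have "\<dots> = (\<Sum>b<n. cnj c * (Q $$ (i,b) * W $$ (b,j))) + (\<Sum>b<n. cnj c * (cnj (Q $$ (b,i)) * W $$ (b,j)))"
      by (simp only: sum.distrib[symmetric] distrib_left distrib_right)
    finally show ?thesis .
  qed
  have f1: "Re (\<Sum>a<n. Q $$ (a,i) * (c * cnj (W $$ (a,j)))) = Re (\<Sum>b<n. cnj c * (cnj (Q $$ (b,i)) * W $$ (b,j)))"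
  proof -
    have eq: "(\<Sum>a<n. Q $$ (a,i) * (c * cnj (W $$ (a,j)))) = cnj (\<Sum>b<n. cnj c * (cnj (Q $$ (b,i)) * W $$ (b,j)))"
      by (simp add: ac_simps)
    show ?thesis unfolding eq by (simp only: cnj.sel(1))
  qed
  have f2: "Re (\<Sum>b<n. Q $$ (i,b) * W $$ (b,j) * cnj c) = Re (\<Sum>b<n. cnj c * (Q $$ (i,b) * W $$ (b,j)))"
    by (simp add: ac_simps)
  show ?thesis unfolding E_def[symmetric] L R plus_complex.sel f1 f2 by simp
qed


lemma re_swap: "Re (cnj z * (c * cnj h)) = Re (cnj c * (h * z))"
  by (simp add: algebra_simps)

lemma poly2_deriv: "((\<lambda>t::real. a + t * b + t^2 * c) has_real_derivative b) (at 0)"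
  by (auto intro!: derivative_eq_intros)

lemma sqnorm_deriv: "((\<lambda>t. (cmod (z + complex_of_real t * d))^2) has_real_derivative 2 * Re (cnj z * d)) (at 0)"
proof -
  have "(\<lambda>t. (cmod (z + complex_of_real t * d))^2) = (\<lambda>t. (cmod z)^2 + t * (2 * Re (cnj z * d)) + t^2 * (cmod d)^2)"
    by (rule ext) (simp add: cmod_power2 power2_sum power_mult_distrib algebra_simps)
  thus ?thesis using poly2_deriv by simp
qed

lemma interf_pos: "s2c k > 0 \<Longrightarrow> interf K Ns H s2c W k > 0"
  unfolding interf_def by (intro add_nonneg_pos add_nonneg_nonneg sum_nonneg) auto

definition Emat :: "nat \<Rightarrow> nat \<Rightarrow> nat \<Rightarrow> nat \<Rightarrow> complex \<Rightarrow> complex mat" where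
  "Emat n m i j c = Matrix.mat n m (\<lambda>(a,b). if a = i \<and> b = j then c else 0)"

lemma hw_pert:
  assumes H: "H \<in> carrier_mat Nt K" and W: "W \<in> carrier_mat Nt n" and i: "i < Nt" and k: "k < K" and l: "l < n"
  shows "hw H (W + complex_of_real t \<cdot>\<^sub>m Emat Nt n i j c) k l = hw H W k l + complex_of_real t * (if l = j then c * cnj (H $$ (i,k)) else 0)"
proof -
  have [simp]: "dim_row H = Nt" "dim_col H = K" "dim_row W = Nt" "dim_col W = n" using H W by auto
  have e: "(mat_adjoint H * Emat Nt n i j c) $$ (k,l) = (if l = j then c * cnj (H $$ (i,k)) else 0)"
  proof -
    have "(mat_adjoint H * Emat Nt n i j c) $$ (k,l) = (\<Sum>a = 0..<Nt. cnj (H $$ (a,k)) * (if a = i then (if l = j then c else 0) else 0))"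
      using k l by (auto simp: scalar_prod_def Emat_def intro!: sum.cong)
    also have "\<dots> = cnj (H $$ (i,k)) * (if l = j then c else 0)"
      by (rule sum_delta_r[OF i])
    finally show ?thesis by simp
  qed
  show ?thesis unfolding hw_def using k l e
    by (simp add: mult_add' mult_smult_right' Emat_def)
qed

lemma interf_deriv:
  assumes H: "H \<in> carrier_mat Nt K" and W: "W \<in> carrier_mat Nt (K+Ns)" and i: "i < Nt" and j: "j < K+Ns" and k: "k < K"
  shows "((\<lambda>t. interf K Ns H s2c (W + complex_of_real t \<cdot>\<^sub>m Emat Nt (K+Ns) i j c) k) has_real_derivative
    (if j = k then 0 else 2 * Re (cnj (hw H W k j) * (c * cnj (H $$ (i,k)))))) (at 0)"
proof -
  define z where "z = (\<lambda>l. hw H W k l)"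
  define dd where "dd = (\<lambda>l. if l = j then c * cnj (H $$ (i,k)) else 0)"
  define Dk where "Dk = 2 * Re (cnj (hw H W k j) * (c * cnj (H $$ (i,k))))"
  have f: "(\<lambda>t. interf K Ns H s2c (W + complex_of_real t \<cdot>\<^sub>m Emat Nt (K+Ns) i j c) k) =
    (\<lambda>t. (\<Sum>l\<in>{..<K} - {k}. (cmod (z l + complex_of_real t * dd l))^2)
       + (\<Sum>l<Ns. (cmod (z (K+l) + complex_of_real t * dd (K+l)))^2) + s2c k)"
  proof (rule ext)
    fix t
    have 1: "(\<Sum>l\<in>{..<K} - {k}. (cmod (hw H (W + complex_of_real t \<cdot>\<^sub>m Emat Nt (K+Ns) i j c) k l))^2) =
       (\<Sum>l\<in>{..<K} - {k}. (cmod (z l + complex_of_real t * dd l))^2)"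
      by (intro sum.cong refl) (simp add: hw_pert[OF H W i k] z_def dd_def)
    have 2: "(\<Sum>l<Ns. (cmod (hw H (W + complex_of_real t \<cdot>\<^sub>m Emat Nt (K+Ns) i j c) k (K+l)))^2) =
       (\<Sum>l<Ns. (cmod (z (K+l) + complex_of_real t * dd (K+l)))^2)"
      by (intro sum.cong refl) (simp add: hw_pert[OF H W i k] z_def dd_def)
    show "interf K Ns H s2c (W + complex_of_real t \<cdot>\<^sub>m Emat Nt (K+Ns) i j c) k =
      (\<Sum>l\<in>{..<K} - {k}. (cmod (z l + complex_of_real t * dd l))^2)
       + (\<Sum>l<Ns. (cmod (z (K+l) + complex_of_real t * dd (K+l)))^2) + s2c k"
      unfolding interf_def 1 2 ..
  qed
  have d: "((\<lambda>t. (\<Sum>l\<in>{..<K} - {k}. (cmod (z l + complex_of_real t * dd l))^2)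
       + (\<Sum>l<Ns. (cmod (z (K+l) + complex_of_real t * dd (K+l)))^2) + s2c k) has_real_derivative
     (\<Sum>l\<in>{..<K} - {k}. 2 * Re (cnj (z l) * dd l)) + (\<Sum>l<Ns. 2 * Re (cnj (z (K+l)) * dd (K+l))) + 0) (at 0)"
    by (intro DERIV_add DERIV_sum sqnorm_deriv DERIV_const)
  have v1: "(\<Sum>l\<in>{..<K} - {k}. 2 * Re (cnj (z l) * dd l)) = (if j < K \<and> j \<noteq> k then Dk else 0)"
  proof -
    have "(\<Sum>l\<in>{..<K} - {k}. 2 * Re (cnj (z l) * dd l)) = (\<Sum>l\<in>{..<K} - {k}. if l = j then Dk else 0)"
      by (intro sum.cong refl) (simp add: dd_def z_def Dk_def)
    also have "\<dots> = (if j < K \<and> j \<noteq> k then Dk else 0)" by (simp add: sum.delta')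
    finally show ?thesis .
  qed
  have v2: "(\<Sum>l<Ns. 2 * Re (cnj (z (K+l)) * dd (K+l))) = (if K \<le> j then Dk else 0)"
  proof (cases "K \<le> j")
    case True
    have "(\<Sum>l<Ns. 2 * Re (cnj (z (K+l)) * dd (K+l))) = (\<Sum>l<Ns. if l = j - K then Dk else 0)"
      using True by (intro sum.cong refl) (auto simp: dd_def z_def Dk_def)
    also have "\<dots> = Dk" using True j by (simp add: sum.delta')
    finally show ?thesis using True by simp
  next
    case False
    thus ?thesis by (auto simp: dd_def intro!: sum.neutral)
  qed
  have "(\<Sum>l\<in>{..<K} - {k}. 2 * Re (cnj (z l) * dd l)) + (\<Sum>l<Ns. 2 * Re (cnj (z (K+l)) * dd (K+l))) + 0
      = (if j = k then 0 else Dk)"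
    unfolding v1 v2 using k j by auto
  thus ?thesis using d unfolding f Dk_def by simp
qed

lemma rate_deriv:
  assumes H: "H \<in> carrier_mat Nt K" and W: "W \<in> carrier_mat Nt (K+Ns)" and i: "i < Nt" and j: "j < K+Ns" and k: "k < K"
    and s: "s2c k > 0"
  shows "((\<lambda>t. rate K Ns H s2c (W + complex_of_real t \<cdot>\<^sub>m Emat Nt (K+Ns) i j c) k) has_real_derivative
    (2 * Re (cnj (hw H W k j) * (c * cnj (H $$ (i,k))))) / (interf K Ns H s2c W k + (cmod (hw H W k k))^2)
    - (if j = k then 0 else 2 * Re (cnj (hw H W k j) * (c * cnj (H $$ (i,k))))) / interf K Ns H s2c W k) (at 0)"
proof -
  define Wt where "Wt = (\<lambda>t. W + complex_of_real t \<cdot>\<^sub>m Emat Nt (K+Ns) i j c)"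
  define I where "I = (\<lambda>t. interf K Ns H s2c (Wt t) k)"
  define T where "T = (\<lambda>t. I t + (cmod (hw H (Wt t) k k))^2)"
  define Dk where "Dk = 2 * Re (cnj (hw H W k j) * (c * cnj (H $$ (i,k))))"
  have Ipos: "I t > 0" for t unfolding I_def by (rule interf_pos[of s2c k, OF s])
  have Tpos: "T t > 0" for t unfolding T_def using Ipos[of t] by (simp add: add_pos_nonneg)
  have W0: "Wt 0 = W" unfolding Wt_def using W by (intro eq_matI) (auto simp: Emat_def)
  have f: "(\<lambda>t. rate K Ns H s2c (Wt t) k) = (\<lambda>t. ln (T t) - ln (I t))"
  proof (rule ext)
    fix t
    have "1 + (cmod (hw H (Wt t) k k))^2 / I t = T t / I t" using Ipos[of t] by (simp add: T_def field_simps)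
    show "rate K Ns H s2c (Wt t) k = ln (T t) - ln (I t)"
    proof -
      have "interf K Ns H s2c (Wt t) k = I t" by (simp add: I_def)
      hence "rate K Ns H s2c (Wt t) k = ln (T t / I t)" unfolding rate_def using \<open>1 + _ = _\<close> by simp
      thus ?thesis using Ipos[of t] Tpos[of t] by (simp add: ln_div)
    qed
  qed
  have dI: "(I has_real_derivative (if j = k then 0 else Dk)) (at 0)"
    unfolding I_def Wt_def Dk_def by (rule interf_deriv[OF H W i j k])
  have hk: "hw H (Wt t) k k = hw H W k k + complex_of_real t * (if k = j then c * cnj (H $$ (i,k)) else 0)" for t
    unfolding Wt_def using k by (intro hw_pert[OF H W i k]) auto
  have dN: "((\<lambda>t. (cmod (hw H (Wt t) k k))^2) has_real_derivative (if j = k then Dk else 0)) (at 0)"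
  proof -
    have "((\<lambda>t. (cmod (hw H W k k + complex_of_real t * (if k = j then c * cnj (H $$ (i,k)) else 0)))^2) has_real_derivative
       2 * Re (cnj (hw H W k k) * (if k = j then c * cnj (H $$ (i,k)) else 0))) (at 0)"
      by (rule sqnorm_deriv)
    moreover have "2 * Re (cnj (hw H W k k) * (if k = j then c * cnj (H $$ (i,k)) else 0)) = (if j = k then Dk else 0)"
      by (auto simp: Dk_def)
    ultimately show ?thesis unfolding hk by simp
  qed
  have dT: "(T has_real_derivative Dk) (at 0)"
  proof -
    have "(T has_real_derivative (if j = k then 0 else Dk) + (if j = k then Dk else 0)) (at 0)"
      unfolding T_def by (intro DERIV_add dI dN)
    thus ?thesis by (cases "j = k") auto
  qed
  have "((\<lambda>t. ln (T t) - ln (I t)) has_real_derivative (1 / T 0) * Dk - (1 / I 0) * (if j = k then 0 else Dk)) (at 0)"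
    by (intro DERIV_diff DERIV_chain2[OF DERIV_ln_divide[OF Tpos[of 0]] dT] DERIV_chain2[OF DERIV_ln_divide[OF Ipos[of 0]] dI])
  moreover have "I 0 = interf K Ns H s2c W k" "T 0 = interf K Ns H s2c W k + (cmod (hw H W k k))^2"
    unfolding T_def I_def W0 by simp_all
  ultimately show ?thesis unfolding f[unfolded Wt_def] Dk_def[symmetric] by simp
qed


lemma adj_diag: "mat_adjoint (mat_diag n f) = mat_diag n (\<lambda>k. cnj (f k))"
  by (rule eq_matI) (auto simp: mat_diag_def)

lemma mat_diag_dims[simp]: "dim_row (mat_diag n f) = n" "dim_col (mat_diag n f) = n"
  by (simp_all add: mat_diag_def)

lemma minus_mult': "dim_row A = dim_row B \<Longrightarrow> dim_col A = dim_col B \<Longrightarrow> dim_col A = dim_row C \<Longrightarrow>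
  (A - B) * (C::'a::ring mat) = A * C - B * C"
  by (rule minus_mult_distrib_mat[of A "dim_row A" "dim_col A" B C "dim_col C"]) auto

lemma pw_aux0: "(I::real) \<noteq> 0 \<Longrightarrow> T \<noteq> 0 \<Longrightarrow> D / T = D / I - (T - I) / I / T * D"
  by (simp add: field_simps)

lemma pw_aux: assumes "(I::real) > 0" "x \<ge> 0" shows "D / (I + x) = D / I - x / I / (I + x) * D"
  using pw_aux0[of I "I + x" D] assms by simp

lemma comm_value:
  fixes c :: complex and dc :: real
  assumes H: "H \<in> carrier_mat Nt K" and W: "W \<in> carrier_mat Nt (K+Ns)" and i: "i < Nt" and j: "j < K+Ns"
    and s: "\<forall>k<K. s2c k > 0"
  defines "I \<equiv> interf K Ns H s2c W"
  defines "Dk \<equiv> \<lambda>k. 2 * Re (cnj (hw H W k j) * (c * cnj (H $$ (i,k))))"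
  defines "beta \<equiv> \<lambda>k. (cmod (hw H W k k))\<^sup>2 / I k / (I k + (cmod (hw H W k k))\<^sup>2)"
  defines "C1 \<equiv> four_block_mat (complex_of_real dc \<cdot>\<^sub>m (H * mat_adjoint (mat_diag K (\<lambda>k. cnj (hw H W k k) / complex_of_real (I k)))))
         (0\<^sub>m Nt Ns) (0\<^sub>m 0 K) (0\<^sub>m 0 Ns)"
  shows "dc * (\<Sum>k<K. Dk k / (I k + (cmod (hw H W k k))\<^sup>2) - (if j = k then 0 else Dk k) / I k) =
     2 * Re (cnj c * C1 $$ (i,j)) - 2 * dc * Re (cnj c * ((H * mat_diag K (\<lambda>k. complex_of_real (beta k)) * mat_adjoint H) * W) $$ (i,j))"
proof -
  have [simp]: "dim_row H = Nt" "dim_col H = K" "dim_row W = Nt" "dim_col W = K+Ns" using H W by auto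
  have Ipos: "I k > 0" if "k < K" for k unfolding I_def using s that interf_pos by blast
  have C1e: "C1 $$ (i,j) = (if j < K then complex_of_real dc * (H $$ (i,j) * (hw H W j j / complex_of_real (I j))) else 0)"
  proof -
    have hd: "H * mat_adjoint (mat_diag K (\<lambda>k. cnj (hw H W k k) / complex_of_real (I k))) =
      Matrix.mat Nt K (\<lambda>(a,b). H $$ (a,b) * cnj (cnj (hw H W b b) / complex_of_real (I b)))"
      unfolding adj_diag by (rule mat_diag_mult_right) (use H in auto)
    show ?thesis unfolding C1_def hd using i j by simp
  qed
  have HSe: "((H * mat_diag K (\<lambda>k. complex_of_real (beta k)) * mat_adjoint H) * W) $$ (i,j) =
     (\<Sum>k<K. H $$ (i,k) * complex_of_real (beta k) * hw H W k j)"
  proof -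
    have e1: "(H * mat_diag K (\<lambda>k. complex_of_real (beta k)) * mat_adjoint H) * W =
        (H * mat_diag K (\<lambda>k. complex_of_real (beta k))) * (mat_adjoint H * W)"
      by (simp add: assoc')
    have e2: "H * mat_diag K (\<lambda>k. complex_of_real (beta k)) = Matrix.mat Nt K (\<lambda>(a,b). H $$ (a,b) * complex_of_real (beta b))"
      by (rule mat_diag_mult_right) (use H in auto)
    show ?thesis unfolding e1 e2 using i j
      apply (simp add: scalar_prod_def atLeast0LessThan hw_def sum_distrib_left sum_distrib_right)
      apply (subst sum.swap)
      apply (simp add: ac_simps)
      done
  qed
  have pw: "dc * (Dk k / (I k + (cmod (hw H W k k))\<^sup>2) - (if j = k then 0 else Dk k) / I k) =
     (if k = j then dc * Dk k / I k else 0) - dc * beta k * Dk k" if k: "k < K" for k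
  proof -
    have I: "I k > 0" using Ipos[OF k] .
    have T: "I k + (cmod (hw H W k k))\<^sup>2 > 0" using I by (simp add: add_pos_nonneg)
    have e: "Dk k / (I k + (cmod (hw H W k k))\<^sup>2) = Dk k / I k - beta k * Dk k"
      unfolding beta_def by (rule pw_aux[OF I]) simp
    show ?thesis unfolding e by (cases "j = k") (simp_all add: algebra_simps)
  qed
  have L: "dc * (\<Sum>k<K. Dk k / (I k + (cmod (hw H W k k))\<^sup>2) - (if j = k then 0 else Dk k) / I k) =
     (if j < K then dc * Dk j / I j else 0) - (\<Sum>k<K. dc * beta k * Dk k)"
  proof -
    have "dc * (\<Sum>k<K. Dk k / (I k + (cmod (hw H W k k))\<^sup>2) - (if j = k then 0 else Dk k) / I k) =
      (\<Sum>k<K. (if k = j then dc * Dk k / I k else 0) - dc * beta k * Dk k)"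
      unfolding sum_distrib_left by (intro sum.cong refl) (simp add: pw)
    also have "\<dots> = (if j < K then dc * Dk j / I j else 0) - (\<Sum>k<K. dc * beta k * Dk k)"
      by (simp add: sum_subtractf sum.delta)
    finally show ?thesis .
  qed
  have R1: "2 * Re (cnj c * C1 $$ (i,j)) = (if j < K then dc * Dk j / I j else 0)"
    unfolding C1e Dk_def by (simp add: re_swap add_divide_distrib diff_divide_distrib algebra_simps)
  have R2: "2 * dc * Re (cnj c * ((H * mat_diag K (\<lambda>k. complex_of_real (beta k)) * mat_adjoint H) * W) $$ (i,j)) =
     (\<Sum>k<K. dc * beta k * Dk k)"
    unfolding HSe Dk_def by (simp add: sum_distrib_left Re_sum re_swap algebra_simps)
  show ?thesis unfolding L R1 R2 ..
qed


context sset begin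

lemma Qmat_carrier: "Qmat M L s2s S W \<in> carrier_mat Nt Nt"
  by (intro carrier_matI) (simp_all add: Qmat_Qsum Qsum_def Qab_def Q3_def Let_def)

lemma grad_entry:
  assumes H: "H \<in> carrier_mat Nt K" and W: "W \<in> carrier_mat Nt (K+Ns)" and i: "i < Nt" and j: "j < K+Ns"
  shows "grad_formula Nt K Ns M L H s2c s2s S dc ds W $$ (i,j) =
    2 * four_block_mat (complex_of_real dc \<cdot>\<^sub>m (H * mat_adjoint (mat_diag K (\<lambda>k. cnj (hw H W k k) / complex_of_real (interf K Ns H s2c W k)))))
         (0\<^sub>m Nt Ns) (0\<^sub>m 0 K) (0\<^sub>m 0 Ns) $$ (i,j)
    + complex_of_real ds * ((Qmat M L s2s S W + mat_adjoint (Qmat M L s2s S W)) * W) $$ (i,j)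
    - complex_of_real (2 * dc) * ((H * mat_diag K (\<lambda>k. complex_of_real ((cmod (hw H W k k))\<^sup>2 / interf K Ns H s2c W k /
         (interf K Ns H s2c W k + (cmod (hw H W k k))\<^sup>2))) * mat_adjoint H) * W) $$ (i,j)"
proof -
  have [simp]: "dim_row H = Nt" "dim_col H = K" "dim_row W = Nt" "dim_col W = K+Ns"
    "dim_row (Qmat M L s2s S W) = Nt" "dim_col (Qmat M L s2s S W) = Nt"
    using H W Qmat_carrier[of L s2s W] by auto
  show ?thesis using i j
    by (simp add: grad_formula_def Let_def add_mult' minus_mult' mult_smult_left' algebra_simps)
qed

lemma main_deriv:
  fixes c :: complex
  assumes H: "H \<in> carrier_mat Nt K" and s: "\<forall>k<K. s2c k > 0"
    and Wt: "Wt \<in> carrier_mat Nt (K+Ns)" and inv: "invertible_mat (fisher M L s2s S Wt)"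
    and i: "i < Nt" and j: "j < K+Ns"
  shows "((\<lambda>t. objective K Ns M L H s2c s2s S dc ds (pert Wt i j (complex_of_real t * c))) has_real_derivative
     Re (cnj c * grad_formula Nt K Ns M L H s2c s2s S dc ds Wt $$ (i,j))) (at 0)"
proof -
  define n where "n = K + Ns"
  define E where "E = Emat Nt n i j c"
  have [simp]: "dim_row Wt = Nt" "dim_col Wt = K + Ns" using Wt by auto
  have cE: "E \<in> carrier_mat Nt n" by (simp add: E_def Emat_def)
  have Wn: "Wt \<in> carrier_mat Nt n" using Wt by (simp add: n_def)
  have pe: "pert Wt i j (complex_of_real t * c) = Wt + complex_of_real t \<cdot>\<^sub>m E" for t
    using pert_eq[of i Wt j t c] i j by (simp add: E_def Emat_def n_def)
  define c0 where "c0 = 2 * real L / s2s"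
  define X where "X = E * mat_adjoint Wt + Wt * mat_adjoint E"
  define Y where "Y = E * mat_adjoint E"
  define F where "F = (\<lambda>t. fisher M L s2s S (Wt + complex_of_real t \<cdot>\<^sub>m E))"
  define F0 where "F0 = fisher M L s2s S Wt"
  define F1 where "F1 = c0 \<cdot>\<^sub>m block4 M (FB S X)"
  define F2 where "F2 = c0 \<cdot>\<^sub>m block4 M (FB S Y)"
  have cX: "X \<in> carrier_mat Nt Nt" using cE Wn by (auto simp: X_def intro!: carrier_matI)
  have cF0: "F0 \<in> carrier_mat (4*M) (4*M)" by (intro carrier_matI) (simp_all add: F0_def)
  have d0: "det F0 \<noteq> 0" using invertible_det[OF inv] cF0 by (simp add: F0_def)
  have dF: "((\<lambda>t. mtrace (minv (F t))) has_real_derivative - mtrace (minv F0 * F1 * minv F0)) (at 0)"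
  proof (rule deriv_trace_inv[of F "4*M" F0 F1 F2])
    show "F t \<in> carrier_mat (4*M) (4*M)" for t by (intro carrier_matI) (simp_all add: F_def)
    show "F0 \<in> carrier_mat (4*M) (4*M)" by (rule cF0)
    show "F1 \<in> carrier_mat (4*M) (4*M)" "F2 \<in> carrier_mat (4*M) (4*M)"
      by (auto simp: F1_def F2_def intro!: carrier_matI)
    show "det F0 \<noteq> 0" by (rule d0)
    show "F t $$ (a,b) = F0 $$ (a,b) + t * F1 $$ (a,b) + t^2 * F2 $$ (a,b)" if "a < 4*M" "b < 4*M" for t a b
      unfolding F_def F0_def F1_def F2_def c0_def X_def Y_def by (rule fisher_poly[OF Wn cE that])
  qed
  define I where "I = interf K Ns H s2c Wt"
  define Dk where "Dk = (\<lambda>k. 2 * Re (cnj (hw H Wt k j) * (c * cnj (H $$ (i,k)))))"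
  have dR: "((\<lambda>t. \<Sum>k<K. rate K Ns H s2c (Wt + complex_of_real t \<cdot>\<^sub>m E) k) has_real_derivative
      (\<Sum>k<K. Dk k / (I k + (cmod (hw H Wt k k))\<^sup>2) - (if j = k then 0 else Dk k) / I k)) (at 0)"
  proof (rule DERIV_sum)
    fix k assume "k \<in> {..<K}"
    hence k: "k < K" by simp
    show "((\<lambda>t. rate K Ns H s2c (Wt + complex_of_real t \<cdot>\<^sub>m E) k) has_real_derivative
      Dk k / (I k + (cmod (hw H Wt k k))\<^sup>2) - (if j = k then 0 else Dk k) / I k) (at 0)"
      unfolding E_def n_def I_def Dk_def using rate_deriv[OF H Wt i j k, of s2c c] s k by simp
  qed
  have obj: "(\<lambda>t. objective K Ns M L H s2c s2s S dc ds (pert Wt i j (complex_of_real t * c))) =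
     (\<lambda>t. dc * (\<Sum>k<K. rate K Ns H s2c (Wt + complex_of_real t \<cdot>\<^sub>m E) k) - ds * mtrace (minv (F t)))"
    by (simp add: objective_def pe F_def)
  have D: "((\<lambda>t. objective K Ns M L H s2c s2s S dc ds (pert Wt i j (complex_of_real t * c))) has_real_derivative
     dc * (\<Sum>k<K. Dk k / (I k + (cmod (hw H Wt k k))\<^sup>2) - (if j = k then 0 else Dk k) / I k)
     - ds * (- mtrace (minv F0 * F1 * minv F0))) (at 0)"
    unfolding obj by (intro DERIV_diff DERIV_cmult dR dF)
  define G0 where "G0 = minv F0"
  define Phi where "Phi = G0 * G0"
  note GP = minv_props[OF cF0 d0]
  have cG0: "G0 \<in> carrier_mat (4*M) (4*M)" using GP by (simp add: G0_def)
  have cPhi: "Phi \<in> carrier_mat (4*M) (4*M)" using cG0 by (simp add: Phi_def)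
  have F0T: "F0\<^sup>T = F0"
    by (rule eq_matI) (auto simp: F0_def intro: fisher_sym[OF Wn])
  have G0T: "G0\<^sup>T = G0" unfolding G0_def by (rule minv_sym[OF cF0 d0 F0T])
  have PhiT: "Phi\<^sup>T = Phi" unfolding Phi_def using transpose_mult[OF cG0 cG0] G0T by simp
  have Phisym: "Phi $$ (a,b) = Phi $$ (b,a)" if "a < 4*M" "b < 4*M" for a b
  proof -
    have "Phi $$ (a,b) = Phi\<^sup>T $$ (a,b)" using PhiT by simp
    also have "\<dots> = Phi $$ (b,a)" using that cPhi by simp
    finally show ?thesis .
  qed
  have cF1: "F1 \<in> carrier_mat (4*M) (4*M)" by (auto simp: F1_def intro!: carrier_matI)
  have cB: "block4 M (FB S X) \<in> carrier_mat (4*M) (4*M)" by (auto intro!: carrier_matI)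
  have tr1: "mtrace (minv F0 * F1 * minv F0) = c0 * mtrace (Phi * block4 M (FB S X))"
  proof -
    have "mtrace (G0 * F1 * G0) = mtrace (G0 * (G0 * F1))"
      using mtrace_comm[of "G0 * F1" "4*M" "4*M" G0] cG0 cF1 by simp
    also have "G0 * (G0 * F1) = Phi * F1" unfolding Phi_def using cG0 cF1
      by (simp add: assoc_mult_mat[of G0 "4*M" "4*M" G0 "4*M" F1 "4*M"])
    also have "Phi * F1 = c0 \<cdot>\<^sub>m (Phi * block4 M (FB S X))" unfolding F1_def
      using cPhi cB by (simp add: mult_smult_right')
    also have "mtrace \<dots> = c0 * mtrace (Phi * block4 M (FB S X))" using cPhi cB by (simp add: mtrace_smult)
    finally show ?thesis by (simp add: G0_def)
  qed
  define Qm where "Qm = Qmat M L s2s S Wt"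
  have cQm: "Qm \<in> carrier_mat Nt Nt" unfolding Qm_def by (rule Qmat_carrier)
  have QmS: "Qm = complex_of_real c0 \<cdot>\<^sub>m Qsum M S Phi"
    unfolding Qm_def Qmat_Qsum Phi_def G0_def F0_def c0_def ..
  have cQs: "Qsum M S Phi \<in> carrier_mat Nt Nt"
    by (intro carrier_matI) (simp_all add: Qsum_def Qab_def Q3_def Let_def)
  have tr2: "Re (mtrace (Qm * X)) = c0 * mtrace (Phi * block4 M (FB S X))"
  proof -
    have "Qm * X = complex_of_real c0 \<cdot>\<^sub>m (Qsum M S Phi * X)" unfolding QmS
      using cQs cX by (simp add: mult_smult_left')
    hence "mtrace (Qm * X) = complex_of_real c0 * mtrace (Qsum M S Phi * X)"
      using cQs cX by (simp add: mtrace_smult)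
    thus ?thesis using trace_Qsum[OF cPhi Phisym cX] by simp
  qed
  have tr3: "Re (mtrace (Qm * X)) = Re (cnj c * ((Qm + mat_adjoint Qm) * Wt) $$ (i,j))"
    unfolding X_def E_def Emat_def n_def by (rule trace_X[OF cQm Wt i j])
  have sens: "mtrace (minv F0 * F1 * minv F0) = Re (cnj c * ((Qm + mat_adjoint Qm) * Wt) $$ (i,j))"
    using tr1 tr2 tr3 by simp
  have comm: "dc * (\<Sum>k<K. Dk k / (I k + (cmod (hw H Wt k k))\<^sup>2) - (if j = k then 0 else Dk k) / I k) =
     2 * Re (cnj c * four_block_mat (complex_of_real dc \<cdot>\<^sub>m (H * mat_adjoint (mat_diag K (\<lambda>k. cnj (hw H Wt k k) / complex_of_real (I k)))))
         (0\<^sub>m Nt Ns) (0\<^sub>m 0 K) (0\<^sub>m 0 Ns) $$ (i,j))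
     - 2 * dc * Re (cnj c * ((H * mat_diag K (\<lambda>k. complex_of_real ((cmod (hw H Wt k k))\<^sup>2 / I k / (I k + (cmod (hw H Wt k k))\<^sup>2))) * mat_adjoint H) * Wt) $$ (i,j))"
    unfolding I_def Dk_def by (rule comm_value[OF H Wt i j s])
  have ge: "Re (cnj c * grad_formula Nt K Ns M L H s2c s2s S dc ds Wt $$ (i,j)) =
     2 * Re (cnj c * four_block_mat (complex_of_real dc \<cdot>\<^sub>m (H * mat_adjoint (mat_diag K (\<lambda>k. cnj (hw H Wt k k) / complex_of_real (I k)))))
         (0\<^sub>m Nt Ns) (0\<^sub>m 0 K) (0\<^sub>m 0 Ns) $$ (i,j))
     - 2 * dc * Re (cnj c * ((H * mat_diag K (\<lambda>k. complex_of_real ((cmod (hw H Wt k k))\<^sup>2 / I k / (I k + (cmod (hw H Wt k k))\<^sup>2))) * mat_adjoint H) * Wt) $$ (i,j))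
     + ds * Re (cnj c * ((Qm + mat_adjoint Qm) * Wt) $$ (i,j))"
    unfolding grad_entry[OF H Wt i j] I_def Qm_def by (simp add: algebra_simps)
  have val: "dc * (\<Sum>k<K. Dk k / (I k + (cmod (hw H Wt k k))\<^sup>2) - (if j = k then 0 else Dk k) / I k)
     - ds * (- mtrace (minv F0 * F1 * minv F0)) = Re (cnj c * grad_formula Nt K Ns M L H s2c s2s S dc ds Wt $$ (i,j))"
    unfolding comm sens ge by (simp add: algebra_simps)
  from D show ?thesis by (simp only: val)
qed

end


theorem proposition3:
  fixes Nt Nr K M L Ns :: nat
    and H Wt :: "complex mat"
    and s2c :: "nat \<Rightarrow> real" and s2s dc ds :: real
    and a b :: "real \<Rightarrow> real \<Rightarrow> nat \<Rightarrow> complex"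
    and th ph :: "nat \<Rightarrow> real" and al :: "nat \<Rightarrow> complex"
  assumes "Nt > 0" "Nr > 0" "K > 0" "M > 0" "L > 0"
    and "H \<in> carrier_mat Nt K"
    and "\<forall>k<K. s2c k > 0" and "s2s > 0" and "dc \<ge> 0" and "ds \<ge> 0"
    and "\<forall>i<Nt. \<forall>p. (\<lambda>q. a (fst q) (snd q) i) differentiable (at p)"
    and "\<forall>i<Nr. \<forall>p. (\<lambda>q. b (fst q) (snd q) i) differentiable (at p)"
    and "Wt \<in> carrier_mat Nt (K + Ns)"
    and "invertible_mat (fisher M L s2s (mk_sens Nt Nr M a b th ph al) Wt)"
  shows "has_gradient (objective K Ns M L H s2c s2s (mk_sens Nt Nr M a b th ph al) dc ds) Wt
           (grad_formula Nt K Ns M L H s2c s2s (mk_sens Nt Nr M a b th ph al) dc ds Wt)"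
proof -
  note H = assms(6) and s = assms(7) and Wt = assms(13) and inv = assms(14)
  define S where "S = mk_sens Nt Nr M a b th ph al"
  have ss: "sset Nt Nr M S" by unfold_locales (simp_all add: S_def mk_sens_def)
  interpret sset Nt Nr M S by (rule ss)
  have [simp]: "dim_row Wt = Nt" "dim_col Wt = K + Ns" "dim_row H = Nt" "dim_col H = K" using Wt H by auto
  show ?thesis unfolding S_def[symmetric] has_gradient_def
  proof (intro conjI allI impI)
    show "grad_formula Nt K Ns M L H s2c s2s S dc ds Wt \<in> carrier_mat (dim_row Wt) (dim_col Wt)"
      by (intro carrier_matI) (simp_all add: grad_formula_def Let_def)
  next
    fix i j assume i: "i < dim_row Wt" and j: "j < dim_col Wt"
    hence i': "i < Nt" and j': "j < K + Ns" by simp_all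
    show "((\<lambda>t. objective K Ns M L H s2c s2s S dc ds (pert Wt i j (complex_of_real t))) has_real_derivative
          Re (grad_formula Nt K Ns M L H s2c s2s S dc ds Wt $$ (i, j))) (at 0)"
      using main_deriv[OF H s Wt inv[unfolded S_def[symmetric]] i' j', where c = 1] by simp
    show "((\<lambda>t. objective K Ns M L H s2c s2s S dc ds (pert Wt i j (\<i> * complex_of_real t))) has_real_derivative
          Im (grad_formula Nt K Ns M L H s2c s2s S dc ds Wt $$ (i, j))) (at 0)"
      using main_deriv[OF H s Wt inv[unfolded S_def[symmetric]] i' j', where c = "\<i>"] by (simp add: mult.commute)
  qed
qed

end
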